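(* Let $$f=\sum_{i+j\leq d} \frac{d!}{i!\, j!\, (d-(i+j))!}\, b_{i,j}\, x_1^{d-(i+j)} x_2^i x_3^j, \qquad b_{i,j}\in \mathbb{K}[A],$$ be an irreducible covariant of order $d$ of the ternary form of degree $n$. Then: (i) the vector space $B_d:=\langle \{b_{i,j}\},\ i+j\leq d\rangle$ is an irreducible $sl_3$-module isomorphic to $\Gamma_{d,0}$; (ii) the element $b_{0,0}$ is a highest vector of the $sl_3$-module $B_d$ with highest weight $[d,0]$; (iii) the covariant $f$ is the Casimir element $f=\Delta(B_d,S^d(X))$ and can be written as $$f=\sum_{i+j\leq d} \frac{1}{i!\, j!}\,\hat D_1^i \hat D_3^j(b_{0,0})\, x_1^{d-(i+j)} x_2^i x_3^j .$$
   Context: $\mathbb{K}$ is a field of characteristic zero. $T_n$ is the space of ternary forms $u(x_1,x_2,x_3)=\sum_{i+j\le n}\frac{n!}{i!j!(n-(i+j))!}a_{i,j}x_1^{n-(i+j)}x_2^ix_3^j$; its coordinate ring is identified with $\mathbb{K}[A]=\mathbb{K}[a_{0,0},\dots,a_{0,n}]$, and the coordinate ring of $T_n\oplus\mathbb{K}^3$ with $\mathbb{K}[A,X]=\mathbb{K}[A,x_1,x_2,x_3]$. $SL_3$ acts by substitutions; covariants are elements of $\mathbb{K}[A,X]^{SL_3}$, and the order of a covariant is its degree in $x_1,x_2,x_3$. $\Gamma_{m_1,m_2}$ denotes the irreducible $sl_3$-module with highest weight $[m_1,m_2]$, weights being eigenvalues of the operators $E_1,E_2$ corresponding to $E_{11}-E_{22}$,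 $E_{22}-E_{33}$. The operators $\hat D_1,\hat D_2,\hat D_3$ correspond to the action of the matrix units $E_{21},E_{32},E_{31}$ (and $D_1,D_2,D_3$ to $E_{12},E_{23},E_{13}$); on $X=\langle x_1,x_2,x_3\rangle$ they act as $\hat D_1=-x_1\partial/\partial x_2$, $\hat D_2=-x_2\partial/\partial x_3$, $\hat D_3=-x_1\partial/\partial x_3$, and on $\mathbb{K}[A]$ as derivations with $\hat D_1(a_{i,j})=(n-(i+j))a_{i+1,j}$, $\hat D_2(a_{i,j})=i\,a_{i-1,j+1}$, $\hat D_3(a_{i,j})=(n-(i+j))a_{i,j+1}$. $S^d(X)$ is the $d$-th symmetric power of $X$. For $sl_3$-modules $U,V$, the symmetric product $U\cdot V$ is the subalgebra of $S(U\oplus V)$ generated by products $uv$, with $g(uv)=g(u)v+ug(v)$; an $sl_3$-invariant of $U\cdot V$ is called a Casimir element, it exists iff $U\cong V^*$, and for contragredient (dual) bases $\{u_k\}$, $\{v_k\}$ it equals $\Delta(U,V)=u_1v_1+\dots+u_mv_m$. *)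

theory Defs
  imports Main "HOL-Library.Poly_Mapping"
begin

text \<open>Variables: A i j is the coordinate a_{i,j} of the ternary form, X m is x_m (m = 1,2,3),
  Y m (m = 1,2,3) are auxiliary variables used only to build a concrete model of the
  irreducible sl_3-module Gamma_{d,0} (symmetric power of the standard representation).\<close>

datatype var = A nat nat | X nat | Y nat

type_synonym 'k mpoly = "(var \<Rightarrow>\<^sub>0 nat) \<Rightarrow>\<^sub>0 'k"

definition Var :: "var \<Rightarrow> 'k::comm_ring_1 mpoly" where
  "Var v = Poly_Mapping.single (Poly_Mapping.single v 1) 1"

definition smult :: "'k::comm_ring_1 \<Rightarrow> 'k mpoly \<Rightarrow> 'k mpoly" where
  "smult c p = Poly_Mapping.map (\<lambda>a. c * a) p"

definition const :: "'k::comm_ring_1 \<Rightarrow> 'k mpoly" where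
  "const c = Poly_Mapping.single 0 c"

definition vars :: "'k::comm_ring_1 mpoly \<Rightarrow> var set" where
  "vars p = \<Union> (Poly_Mapping.keys ` Poly_Mapping.keys p)"

definition in_KA :: "nat \<Rightarrow> 'k::comm_ring_1 mpoly \<Rightarrow> bool" where
  "in_KA n p \<longleftrightarrow> vars p \<subseteq> {A i j | i j. i + j \<le> n}"

definition in_KAX :: "nat \<Rightarrow> 'k::comm_ring_1 mpoly \<Rightarrow> bool" where
  "in_KAX n p \<longleftrightarrow> vars p \<subseteq> {A i j | i j. i + j \<le> n} \<union> {X 1, X 2, X 3}"

definition xmon :: "nat \<Rightarrow> nat \<Rightarrow> nat \<Rightarrow> 'k::comm_ring_1 mpoly" where
  "xmon a b c = Var (X 1) ^ a * Var (X 2) ^ b * Var (X 3) ^ c"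

definition ymon :: "nat \<Rightarrow> nat \<Rightarrow> nat \<Rightarrow> 'k::comm_ring_1 mpoly" where
  "ymon a b c = Var (Y 1) ^ a * Var (Y 2) ^ b * Var (Y 3) ^ c"

definition idx :: "nat \<Rightarrow> (nat \<times> nat) set" where
  "idx d = {(i, j). i + j \<le> d}"

definition lin_span :: "'k::comm_ring_1 mpoly set \<Rightarrow> 'k mpoly set" where
  "lin_span S = {p. \<exists>F c. finite F \<and> F \<subseteq> S \<and> p = (\<Sum>s\<in>F. smult (c s) s)}"

definition subspace :: "'k::comm_ring_1 mpoly set \<Rightarrow> bool" where
  "subspace V \<longleftrightarrow> 0 \<in> V \<and> (\<forall>u\<in>V. \<forall>v\<in>V. u + v \<in> V) \<and> (\<forall>c. \<forall>u\<in>V. smult c u \<in> V)"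

text \<open>Generators of sl_3: D1, D2, D3 ~ E12, E23, E13; hD1, hD2, hD3 ~ E21, E32, E31;
  H1 ~ E11 - E22, H2 ~ E22 - E33.\<close>

datatype sl3 = D1 | D2 | D3 | hD1 | hD2 | hD3 | H1 | H2

text \<open>On X: E_kl acts as -x_l d/dx_k (so hD1 = -x1 d/dx2 etc.).
  On A: the action (given in the paper for hD1, hD2, hD3) for which the form u itself
  is invariant. On Y: E_kl acts as y_k d/dy_l (standard representation).\<close>

fun on_var :: "nat \<Rightarrow> sl3 \<Rightarrow> var \<Rightarrow> 'k::comm_ring_1 mpoly" where
  "on_var n D1 (A i j) = of_nat i * Var (A (i - 1) j)"
| "on_var n D2 (A i j) = of_nat j * Var (A (i + 1) (j - 1))"
| "on_var n D3 (A i j) = of_nat j * Var (A i (j - 1))"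
| "on_var n hD1 (A i j) = of_nat (n - (i + j)) * Var (A (i + 1) j)"
| "on_var n hD2 (A i j) = of_nat i * Var (A (i - 1) (j + 1))"
| "on_var n hD3 (A i j) = of_nat (n - (i + j)) * Var (A i (j + 1))"
| "on_var n H1 (A i j) = (of_nat (n - (i + j)) - of_nat i) * Var (A i j)"
| "on_var n H2 (A i j) = (of_nat i - of_nat j) * Var (A i j)"
| "on_var n D1 (X m) = (if m = 1 then - Var (X 2) else 0)"
| "on_var n D2 (X m) = (if m = 2 then - Var (X 3) else 0)"
| "on_var n D3 (X m) = (if m = 1 then - Var (X 3) else 0)"
| "on_var n hD1 (X m) = (if m = 2 then - Var (X 1) else 0)"
| "on_var n hD2 (X m) = (if m = 3 then - Var (X 2) else 0)"
| "on_var n hD3 (X m) = (if m = 3 then - Var (X 1) else 0)"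
| "on_var n H1 (X m) = (if m = 1 then - Var (X 1) else if m = 2 then Var (X 2) else 0)"
| "on_var n H2 (X m) = (if m = 2 then - Var (X 2) else if m = 3 then Var (X 3) else 0)"
| "on_var n D1 (Y m) = (if m = 2 then Var (Y 1) else 0)"
| "on_var n D2 (Y m) = (if m = 3 then Var (Y 2) else 0)"
| "on_var n D3 (Y m) = (if m = 3 then Var (Y 1) else 0)"
| "on_var n hD1 (Y m) = (if m = 1 then Var (Y 2) else 0)"
| "on_var n hD2 (Y m) = (if m = 2 then Var (Y 3) else 0)"
| "on_var n hD3 (Y m) = (if m = 1 then Var (Y 3) else 0)"
| "on_var n H1 (Y m) = (if m = 1 then Var (Y 1) else if m = 2 then - Var (Y 2) else 0)"
| "on_var n H2 (Y m) = (if m = 2 then Var (Y 2) else if m = 3 then - Var (Y 3) else 0)"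

text \<open>Extension of the action on variables to the polynomial ring as a derivation.\<close>

definition act :: "nat \<Rightarrow> sl3 \<Rightarrow> 'k::comm_ring_1 mpoly \<Rightarrow> 'k mpoly" where
  "act n g p = (\<Sum>m\<in>Poly_Mapping.keys p. \<Sum>v\<in>Poly_Mapping.keys m.
      Poly_Mapping.single (m - Poly_Mapping.single v 1)
        (Poly_Mapping.lookup p m * of_nat (Poly_Mapping.lookup m v)) * on_var n g v)"

definition is_covariant :: "nat \<Rightarrow> 'k::comm_ring_1 mpoly \<Rightarrow> bool" where
  "is_covariant n p \<longleftrightarrow> in_KAX n p \<and> (\<forall>g. act n g p = 0)"

fun is_A :: "var \<Rightarrow> bool" where
  "is_A (A i j) = True" | "is_A (X m) = False" | "is_A (Y m) = False"

definition A_deg :: "(var \<Rightarrow>\<^sub>0 nat) \<Rightarrow> nat" where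
  "A_deg m = (\<Sum>v\<in>Poly_Mapping.keys m. if is_A v then Poly_Mapping.lookup m v else 0)"

definition homogA :: "nat \<Rightarrow> 'k::comm_ring_1 mpoly \<Rightarrow> bool" where
  "homogA k p \<longleftrightarrow> (\<forall>m\<in>Poly_Mapping.keys p. A_deg m = k)"

inductive_set gen_alg :: "'k::comm_ring_1 mpoly set \<Rightarrow> 'k mpoly set" for S where
  gen_const: "const c \<in> gen_alg S"
| gen_base: "s \<in> S \<Longrightarrow> s \<in> gen_alg S"
| gen_add: "p \<in> gen_alg S \<Longrightarrow> q \<in> gen_alg S \<Longrightarrow> p + q \<in> gen_alg S"
| gen_mult: "p \<in> gen_alg S \<Longrightarrow> q \<in> gen_alg S \<Longrightarrow> p * q \<in> gen_alg S"

definition irreducible_covariant :: "nat \<Rightarrow> 'k::comm_ring_1 mpoly \<Rightarrow> bool" where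
  "irreducible_covariant n f \<longleftrightarrow> is_covariant n f \<and>
     (\<exists>k. homogA k f \<and> f \<notin> gen_alg {g. is_covariant n g \<and> (\<exists>k'<k. homogA k' g)})"

definition sl3_module :: "nat \<Rightarrow> 'k::comm_ring_1 mpoly set \<Rightarrow> bool" where
  "sl3_module n V \<longleftrightarrow> subspace V \<and> (\<forall>g. \<forall>v\<in>V. act n g v \<in> V)"

definition irreducible_module :: "nat \<Rightarrow> 'k::comm_ring_1 mpoly set \<Rightarrow> bool" where
  "irreducible_module n V \<longleftrightarrow> sl3_module n V \<and> V \<noteq> {0} \<and>
     (\<forall>W. W \<subseteq> V \<and> sl3_module n W \<longrightarrow> W = {0} \<or> W = V)"

definition modules_iso :: "nat \<Rightarrow> 'k::comm_ring_1 mpoly set \<Rightarrow> 'k mpoly set \<Rightarrow> bool" where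
  "modules_iso n V W \<longleftrightarrow> (\<exists>\<phi>. bij_betw \<phi> V W \<and>
     (\<forall>u\<in>V. \<forall>v\<in>V. \<phi> (u + v) = \<phi> u + \<phi> v) \<and>
     (\<forall>c. \<forall>u\<in>V. \<phi> (smult c u) = smult c (\<phi> u)) \<and>
     (\<forall>g. \<forall>u\<in>V. \<phi> (act n g u) = act n g (\<phi> u)))"

text \<open>Concrete model of Gamma_{d,0}: degree-d polynomials in y1,y2,y3 with the standard
  action; its highest vector y1^d has weight [d,0].\<close>

definition Gamma_d0 :: "nat \<Rightarrow> 'k::comm_ring_1 mpoly set" where
  "Gamma_d0 d = lin_span {ymon a b c | a b c. a + b + c = d}"

definition SdX :: "nat \<Rightarrow> 'k::comm_ring_1 mpoly set" where
  "SdX d = lin_span {xmon a b c | a b c. a + b + c = d}"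

definition highest_vector :: "nat \<Rightarrow> 'k::comm_ring_1 mpoly set \<Rightarrow> 'k mpoly \<Rightarrow> nat \<Rightarrow> nat \<Rightarrow> bool" where
  "highest_vector n V v m1 m2 \<longleftrightarrow> v \<in> V \<and> v \<noteq> 0 \<and>
     act n D1 v = 0 \<and> act n D2 v = 0 \<and> act n D3 v = 0 \<and>
     act n H1 v = smult (of_nat m1) v \<and> act n H2 v = smult (of_nat m2) v"

definition is_basis :: "nat \<Rightarrow> 'k::comm_ring_1 mpoly set \<Rightarrow> (nat \<Rightarrow> 'k mpoly) \<Rightarrow> bool" where
  "is_basis N V u \<longleftrightarrow> V = lin_span (u ` {..<N}) \<and>
     (\<forall>a. (\<Sum>k<N. smult (a k) (u k)) = 0 \<longrightarrow> (\<forall>k<N. a k = 0))"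

text \<open>f = Delta(U,V) = u_1 v_1 + ... + u_N v_N for contragredient (dual) bases {u_k} of U and
  {v_k} of V: if g u_k = sum_l c_{lk} u_l then g v_k = - sum_l c_{kl} v_l for every g in sl_3.\<close>

definition is_Casimir :: "nat \<Rightarrow> 'k::comm_ring_1 mpoly set \<Rightarrow> 'k mpoly set \<Rightarrow> 'k mpoly \<Rightarrow> bool" where
  "is_Casimir n U V f \<longleftrightarrow> (\<exists>N u v c. is_basis N U u \<and> is_basis N V v \<and>
     (\<forall>g. \<forall>k<N. act n g (u k) = (\<Sum>l<N. smult (c g l k) (u l)) \<and>
                act n g (v k) = (\<Sum>l<N. smult (- c g k l) (v l))) \<and>
     f = (\<Sum>k<N. u k * v k))"

end

theory Submission
  imports Defs
begin


abbreviation lk :: "('a \<Rightarrow>\<^sub>0 'b::zero) \<Rightarrow> 'a \<Rightarrow> 'b" where "lk \<equiv> Poly_Mapping.lookup"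
abbreviation ks :: "('a \<Rightarrow>\<^sub>0 'b::zero) \<Rightarrow> 'a set" where "ks \<equiv> Poly_Mapping.keys"
abbreviation sg :: "'a \<Rightarrow> 'b::zero \<Rightarrow> ('a \<Rightarrow>\<^sub>0 'b)" where "sg \<equiv> Poly_Mapping.single"

lemma pm_expand: "p = (\<Sum>m\<in>ks p. sg m (lk p m))"
proof (rule poly_mapping_eqI)
  fix k
  have "lk (\<Sum>m\<in>ks p. sg m (lk p m)) k = (\<Sum>m\<in>ks p. (lk p m when m = k))"
    by (simp add: lookup_sum lookup_single)
  also have "\<dots> = lk p k"
  proof (cases "k \<in> ks p")
    case True
    then show ?thesis by (simp add: when_def sum.delta' )
  next
    case False
    then show ?thesis by (auto simp: when_def in_keys_iff)
  qed
  finally show "lk p k = lk (\<Sum>m\<in>ks p. sg m (lk p m)) k" by simp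
qed

lemma pm_expand_sup: "finite S \<Longrightarrow> ks p \<subseteq> S \<Longrightarrow> p = (\<Sum>m\<in>S. sg m (lk p m))"
  apply (subst pm_expand)
  apply (rule sum.mono_neutral_left)
  apply (auto simp: in_keys_iff)
  done

lemma smult_const: "smult c (p::'k::comm_ring_1 mpoly) = const c * p"
  unfolding smult_def const_def by (rule mult_map_scale_conv_mult)

lemma const_mult: "const (a * b) = (const a * const b :: 'k::comm_ring_1 mpoly)"
  unfolding const_def by (simp add: mult_single)
lemma const_add: "const (a + b) = (const a + const b :: 'k::comm_ring_1 mpoly)"
  unfolding const_def by (simp add: single_add)
lemma const_0[simp]: "const 0 = (0 :: 'k::comm_ring_1 mpoly)"
  unfolding const_def by simp
lemma const_1[simp]: "const 1 = (1 :: 'k::comm_ring_1 mpoly)"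
  unfolding const_def by simp
lemma const_neg: "const (- a) = (- const a :: 'k::comm_ring_1 mpoly)"
  unfolding const_def by (simp add: single_uminus)
lemma const_of_nat: "const (of_nat k) = (of_nat k :: 'k::comm_ring_1 mpoly)"
  unfolding const_def by simp
lemma const_diff: "const (a - b) = (const a - const b :: 'k::comm_ring_1 mpoly)"
  unfolding const_def by (simp add: single_diff)

lemma smult_add_r: "smult c (p + q) = smult c p + smult c (q::'k::comm_ring_1 mpoly)"
  by (simp add: smult_const distrib_left)
lemma smult_add_l: "smult (a + b) p = smult a p + smult b (p::'k::comm_ring_1 mpoly)"
  by (simp add: smult_const const_add distrib_right)
lemma smult_smult: "smult a (smult b p) = smult (a * b) (p::'k::comm_ring_1 mpoly)"
  by (simp add: smult_const const_mult mult.assoc)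
lemma smult_one[simp]: "smult 1 p = (p::'k::comm_ring_1 mpoly)"
  by (simp add: smult_const)
lemma smult_zero_l[simp]: "smult 0 p = (0::'k::comm_ring_1 mpoly)"
  by (simp add: smult_const)
lemma smult_zero_r[simp]: "smult c 0 = (0::'k::comm_ring_1 mpoly)"
  by (simp add: smult_const)
lemma smult_sum: "smult c (\<Sum>i\<in>I. f i) = (\<Sum>i\<in>I. smult c (f i :: 'k::comm_ring_1 mpoly))"
  by (simp add: smult_const sum_distrib_left)
lemma sum_smult: "smult (\<Sum>i\<in>I. f i) p = (\<Sum>i\<in>I. smult (f i) (p :: 'k::comm_ring_1 mpoly))"
  by (induction I rule: infinite_finite_induct) (auto simp: smult_add_l)
lemma smult_mult_l: "smult c p * q = smult c (p * q :: 'k::comm_ring_1 mpoly)"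
  by (simp add: smult_const mult.assoc)
lemma smult_mult_r: "p * smult c q = smult c (p * q :: 'k::comm_ring_1 mpoly)"
  by (simp add: smult_const mult.left_commute)
lemma smult_neg_l: "smult (- c) p = - smult c (p::'k::comm_ring_1 mpoly)"
  by (simp add: smult_const const_neg)
lemma smult_single: "smult c (sg m a) = (sg m (c * a) :: 'k::comm_ring_1 mpoly)"
  unfolding smult_def by simp
lemma lookup_smult: "lk (smult c p) m = c * lk (p::'k::comm_ring_1 mpoly) m"
  unfolding smult_def by (simp add: Poly_Mapping.map.rep_eq when_def)
lemma smult_of_nat: "smult (of_nat k) p = of_nat k * (p::'k::comm_ring_1 mpoly)"
  by (simp add: smult_const const_of_nat)
lemma single_mult_const: "sg m (a * b) = const a * (sg m b :: 'k::comm_ring_1 mpoly)"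
  unfolding const_def by (simp add: mult_single)


definition dm :: "nat \<Rightarrow> sl3 \<Rightarrow> (var \<Rightarrow>\<^sub>0 nat) \<Rightarrow> 'k::comm_ring_1 mpoly" where
  "dm n g m = (\<Sum>v\<in>ks m. sg (m - sg v 1) (of_nat (lk m v)) * on_var n g v)"

lemma act_dm: "act n g p = (\<Sum>m\<in>ks p. const (lk p m) * dm n g m)"
  unfolding act_def dm_def
  by (simp add: single_mult_const sum_distrib_left mult.assoc)

lemma act_sup: "finite S \<Longrightarrow> ks p \<subseteq> S \<Longrightarrow> act n g p = (\<Sum>m\<in>S. const (lk p m) * dm n g m)"
  unfolding act_dm
  by (rule sum.mono_neutral_left) (auto simp: in_keys_iff)

lemma act_add: "act n g (p + q) = act n g p + act n g (q::'k::comm_ring_1 mpoly)"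
proof -
  let ?S = "ks p \<union> ks q"
  have "act n g (p + q) = (\<Sum>m\<in>?S. const (lk (p+q) m) * dm n g m)"
    using keys_add[of p q] by (intro act_sup) auto
  also have "\<dots> = (\<Sum>m\<in>?S. const (lk p m) * dm n g m) + (\<Sum>m\<in>?S. const (lk q m) * dm n g m)"
    by (simp add: lookup_add const_add distrib_right sum.distrib)
  also have "\<dots> = act n g p + act n g q"
    by (subst (1 2) act_sup[of ?S]) auto
  finally show ?thesis .
qed

lemma act_zero[simp]: "act n g (0::'k::comm_ring_1 mpoly) = 0"
  by (simp add: act_dm)

lemma act_smult: "act n g (smult c p) = smult c (act n g (p::'k::comm_ring_1 mpoly))"
proof -
  have "act n g (smult c p) = (\<Sum>m\<in>ks p. const (lk (smult c p) m) * dm n g m)"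
    by (rule act_sup) (auto simp: in_keys_iff lookup_smult)
  also have "\<dots> = (\<Sum>m\<in>ks p. const c * (const (lk p m) * dm n g m))"
    by (simp add: lookup_smult const_mult mult.assoc)
  also have "\<dots> = smult c (act n g p)"
    by (simp add: act_dm smult_const sum_distrib_left)
  finally show ?thesis .
qed

lemma act_sum: "act n g (\<Sum>i\<in>I. f i) = (\<Sum>i\<in>I. act n g (f i :: 'k::comm_ring_1 mpoly))"
  by (induction I rule: infinite_finite_induct) (auto simp: act_add)

lemma act_neg: "act n g (- p) = - act n g (p::'k::comm_ring_1 mpoly)"
  using act_smult[of n g "-1" p] by (simp add: smult_neg_l)

lemma act_single: "act n g (sg m a) = const a * (dm n g m :: 'k::comm_ring_1 mpoly)"
  by (simp add: act_dm const_def)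

lemma act_const: "act n g (const c) = (0::'k::comm_ring_1 mpoly)"
  by (simp add: const_def act_single dm_def)

lemma dm_sup: "finite S \<Longrightarrow> ks m \<subseteq> S \<Longrightarrow>
   dm n g m = (\<Sum>v\<in>S. sg (m - sg v 1) (of_nat (lk m v)) * (on_var n g v :: 'k::comm_ring_1 mpoly))"
  unfolding dm_def
  by (rule sum.mono_neutral_left) (auto simp: in_keys_iff)

lemma minus_single_shift:
  assumes "lk m v \<noteq> 0"
  shows "m + m' - sg v 1 = m - sg v 1 + (m'::var \<Rightarrow>\<^sub>0 nat)"
proof (rule poly_mapping_eqI)
  fix k show "lk (m + m' - sg v 1) k = lk (m - sg v 1 + m') k"
    using assms by (cases "k = v") (simp_all add: lookup_minus lookup_add lookup_single)
qed

lemma shiftA: "sg (m + m' - sg v 1) (of_nat (lk m v)) = (sg (m - sg v 1 + m') (of_nat (lk m v)) :: 'k::comm_ring_1 mpoly)"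
proof (cases "lk m v = 0")
  case True then show ?thesis by simp
next
  case False then show ?thesis by (simp only: minus_single_shift[OF False])
qed

lemma shiftB: "sg (m + m' - sg v 1) (of_nat (lk m' v)) = (sg (m + (m' - sg v 1)) (of_nat (lk m' v)) :: 'k::comm_ring_1 mpoly)"
proof (cases "lk m' v = 0")
  case True then show ?thesis by simp
next
  case False
  have "m' + m - sg v 1 = m' - sg v 1 + m" by (rule minus_single_shift[OF False])
  then have "m + m' - sg v 1 = m + (m' - sg v 1)" by (simp only: add.commute)
  then show ?thesis by simp
qed

lemma dm_term: "sg (m + m' - sg v 1) (of_nat (lk (m + m') v)) * ov =
      sg (m - sg v 1) (of_nat (lk m v)) * ov * sg m' 1
      + sg m 1 * (sg (m' - sg v 1) (of_nat (lk m' v)) * (ov :: 'k::comm_ring_1 mpoly))"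
proof -
  have "sg (m + m' - sg v 1) (of_nat (lk (m + m') v)) * ov =
    sg (m + m' - sg v 1) (of_nat (lk m v)) * ov + sg (m + m' - sg v 1) (of_nat (lk m' v)) * (ov :: 'k mpoly)"
    by (simp only: lookup_add of_nat_add single_add distrib_right)
  also have "\<dots> = sg (m - sg v 1 + m') (of_nat (lk m v)) * ov + sg (m + (m' - sg v 1)) (of_nat (lk m' v)) * ov"
    by (simp only: shiftA shiftB)
  also have "\<dots> = (sg (m - sg v 1) (of_nat (lk m v)) * sg m' 1) * ov + (sg m 1 * sg (m' - sg v 1) (of_nat (lk m' v))) * ov"
    by (simp only: mult_single mult_1 mult_1_right)
  also have "\<dots> = sg (m - sg v 1) (of_nat (lk m v)) * ov * sg m' 1
      + sg m 1 * (sg (m' - sg v 1) (of_nat (lk m' v)) * (ov :: 'k::comm_ring_1 mpoly))"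
    by (simp only: ac_simps)
  finally show ?thesis .
qed
lemma dm_add: "dm n g (m + m') = dm n g m * sg m' 1 + sg m 1 * (dm n g m' :: 'k::comm_ring_1 mpoly)"
proof -
  let ?S = "ks m \<union> ks m'"
  have kk: "ks (m + m') \<subseteq> ?S" by (rule keys_add)
  have t: "sg (m + m' - sg v 1) (of_nat (lk (m + m') v)) * on_var n g v =
      sg (m - sg v 1) (of_nat (lk m v)) * on_var n g v * sg m' 1
      + sg m 1 * (sg (m' - sg v 1) (of_nat (lk m' v)) * (on_var n g v :: 'k mpoly))" for v
    by (rule dm_term)
  have "dm n g (m + m') = (\<Sum>v\<in>?S. sg (m + m' - sg v 1) (of_nat (lk (m + m') v)) * (on_var n g v :: 'k mpoly))"
    by (rule dm_sup[OF _ kk]) simp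
  also have "\<dots> = (\<Sum>v\<in>?S. sg (m - sg v 1) (of_nat (lk m v)) * on_var n g v * sg m' 1
      + sg m 1 * (sg (m' - sg v 1) (of_nat (lk m' v)) * (on_var n g v :: 'k mpoly)))"
    by (rule sum.cong[OF refl t])
  also have "\<dots> = (\<Sum>v\<in>?S. sg (m - sg v 1) (of_nat (lk m v)) * on_var n g v) * sg m' 1
      + sg m 1 * (\<Sum>v\<in>?S. sg (m' - sg v 1) (of_nat (lk m' v)) * (on_var n g v :: 'k mpoly))"
    by (simp only: sum.distrib sum_distrib_left sum_distrib_right)
  also have "\<dots> = dm n g m * sg m' 1 + sg m 1 * dm n g m'"
    by (simp only: dm_sup[of ?S m, symmetric] dm_sup[of ?S m', symmetric] finite_UnI finite_keys Un_upper1 Un_upper2)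
  finally show ?thesis .
qed

lemma act_mult_single: "act n g (sg m a * sg m' b) =
   act n g (sg m a) * sg m' b + sg m a * act n g (sg m' b :: 'k::comm_ring_1 mpoly)"
proof -
  have e1: "sg m a = const a * (sg m 1 :: 'k mpoly)" using single_mult_const[of m a 1] by simp
  have e2: "sg m' b = const b * (sg m' 1 :: 'k mpoly)" using single_mult_const[of m' b 1] by simp
  have "act n g (sg m a * sg m' b) = const (a * b) * (dm n g m * sg m' 1 + sg m 1 * (dm n g m' :: 'k mpoly))"
    by (simp only: mult_single act_single dm_add)
  also have "\<dots> = (const a * dm n g m) * (const b * sg m' 1) + (const a * sg m 1) * (const b * dm n g m')"
    by (simp only: const_mult distrib_left ac_simps)
  also have "\<dots> = act n g (sg m a) * sg m' b + sg m a * act n g (sg m' b)"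
    by (simp only: act_single e1[symmetric] e2[symmetric])
  finally show ?thesis .
qed

lemma leib_sum:
  assumes "\<And>a b. a \<in> AA \<Longrightarrow> b \<in> BB \<Longrightarrow> act n g (F a * G b) = act n g (F a) * G b + F a * act n g (G b :: 'k::comm_ring_1 mpoly)"
  shows "act n g (sum F AA * sum G BB) = act n g (sum F AA) * sum G BB + sum F AA * act n g (sum G BB)"
proof -
  have "act n g (sum F AA * sum G BB) = (\<Sum>a\<in>AA. \<Sum>b\<in>BB. act n g (F a * G b))"
    by (simp add: sum_product act_sum)
  also have "\<dots> = (\<Sum>a\<in>AA. \<Sum>b\<in>BB. act n g (F a) * G b) + (\<Sum>a\<in>AA. \<Sum>b\<in>BB. F a * act n g (G b))"
    by (simp add: assms sum.distrib)
  also have "\<dots> = act n g (sum F AA) * sum G BB + sum F AA * act n g (sum G BB)"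
    by (simp add: sum_product act_sum)
  finally show ?thesis .
qed

lemma act_mult: "act n g (p * q) = act n g p * q + p * act n g (q::'k::comm_ring_1 mpoly)"
proof -
  have "act n g ((\<Sum>m\<in>ks p. sg m (lk p m)) * (\<Sum>m\<in>ks q. sg m (lk q m))) =
     act n g (\<Sum>m\<in>ks p. sg m (lk p m)) * (\<Sum>m\<in>ks q. sg m (lk q m)) +
     (\<Sum>m\<in>ks p. sg m (lk p m)) * act n g (\<Sum>m\<in>ks q. sg m (lk q m))"
    by (rule leib_sum) (rule act_mult_single)
  then show ?thesis by (simp only: pm_expand[symmetric])
qed

lemma act_Var: "act n g (Var v) = (on_var n g v :: 'k::comm_ring_1 mpoly)"
  by (simp add: Var_def act_single dm_def)

lemma act_power: "act n g (p ^ Suc k) = of_nat (Suc k) * p ^ k * act n g (p::'k::comm_ring_1 mpoly)"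
  by (induction k) (auto simp: act_mult algebra_simps)

lemma act_one[simp]: "act n g (1::'k::comm_ring_1 mpoly) = 0"
  using act_const[of n g 1] by simp


lemma Var_power: "Var v ^ k = (sg (sg v k) 1 :: 'k::comm_ring_1 mpoly)"
proof (induction k)
  case 0 then show ?case by simp
next
  case (Suc k)
  have "Var v ^ Suc k = Var v * (Var v ^ k :: 'k mpoly)" by simp
  also have "\<dots> = sg (sg v 1) 1 * (sg (sg v k) 1 :: 'k mpoly)" unfolding Suc.IH by (simp only: Var_def)
  also have "\<dots> = sg (sg v (Suc k)) 1" by (simp add: mult_single single_add[symmetric])
  finally show ?case .
qed

definition xm :: "nat \<Rightarrow> nat \<Rightarrow> nat \<Rightarrow> var \<Rightarrow>\<^sub>0 nat" where
  "xm a b c = sg (X 1) a + sg (X 2) b + sg (X 3) c"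
definition ym :: "nat \<Rightarrow> nat \<Rightarrow> nat \<Rightarrow> var \<Rightarrow>\<^sub>0 nat" where
  "ym a b c = sg (Y 1) a + sg (Y 2) b + sg (Y 3) c"

lemma xmon_single: "xmon a b c = (sg (xm a b c) 1 :: 'k::comm_ring_1 mpoly)"
  by (simp add: xmon_def xm_def Var_power mult_single)
lemma ymon_single: "ymon a b c = (sg (ym a b c) 1 :: 'k::comm_ring_1 mpoly)"
  by (simp add: ymon_def ym_def Var_power mult_single)

definition noX :: "'k::comm_ring_1 mpoly \<Rightarrow> bool" where
  "noX p \<longleftrightarrow> (\<forall>m\<in>ks p. \<forall>r. lk m (X r) = 0)"

lemma noX_0[simp]: "noX 0" by (simp add: noX_def)
lemma noX_add: "noX p \<Longrightarrow> noX q \<Longrightarrow> noX (p + q)"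
  using keys_add[of p q] by (auto simp: noX_def)
lemma noX_mult: "noX p \<Longrightarrow> noX q \<Longrightarrow> noX (p * q)"
  using keys_mult[of p q] unfolding noX_def by (fastforce simp: lookup_add)
lemma noX_sum: "(\<And>i. i \<in> I \<Longrightarrow> noX (f i)) \<Longrightarrow> noX (\<Sum>i\<in>I. f i)"
  by (induction I rule: infinite_finite_induct) (auto intro: noX_add)
lemma noX_single: "(\<forall>r. lk m (X r) = 0) \<Longrightarrow> noX (sg m a)"
  by (simp add: noX_def)
lemma noX_const: "noX (const c)"
  by (simp add: const_def noX_single)
lemma noX_smult: "noX p \<Longrightarrow> noX (smult c p)"
  by (simp add: smult_const noX_mult noX_const)
lemma noX_neg: "noX p \<Longrightarrow> noX (- p)"
  using noX_smult[of p "-1"] by (simp add: smult_neg_l)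
lemma noX_diff: "noX p \<Longrightarrow> noX q \<Longrightarrow> noX (p - q)"
  using noX_add[of p "- q"] noX_neg[of q] by simp
lemma noX_of_nat: "noX (of_nat k)"
  using noX_const[of "of_nat k"] by (simp add: const_of_nat)
lemma noX_Var: "\<not> (\<exists>r. v = X r) \<Longrightarrow> noX (Var v)"
  by (auto simp: Var_def noX_single lookup_single when_def)

lemma noX_on_var: assumes nx: "\<not> (\<exists>r. v = X r)" shows "noX (on_var n g v)"
proof (cases v)
  case (A i j)
  then show ?thesis by (cases g) (auto intro!: noX_mult noX_Var noX_of_nat noX_add noX_neg noX_diff
      simp del: of_nat_diff simp: of_nat_diff[symmetric])
next
  case (X r)
  then show ?thesis using nx by simp
next
  case (Y r)
  then show ?thesis by (cases g) (auto intro!: noX_Var noX_neg)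
qed

lemma noX_act: "noX p \<Longrightarrow> noX (act n g p)"
  unfolding act_dm dm_def
proof (intro noX_sum noX_mult noX_const)
  fix m v assume p: "noX p" and m: "m \<in> ks p" and v: "v \<in> ks m"
  have mx: "\<forall>r. lk m (X r) = 0" using p m by (auto simp: noX_def)
  then show "noX (sg (m - sg v 1) (of_nat (lk m v)))"
    by (intro noX_single) (simp add: lookup_minus)
  have "\<not> (\<exists>r. v = X r)" using mx v by (auto simp: in_keys_iff)
  then show "noX (on_var n g v)" by (rule noX_on_var)
qed

lemma in_KA_noX: "in_KA n p \<Longrightarrow> noX p"
  unfolding in_KA_def vars_def noX_def
  by (force simp: in_keys_iff)

lemma lookup_mult_single1:
  "lk (p * sg M 1) k = (\<Sum>m\<in>ks p. (lk p m when m + M = k))" for p :: "'k::comm_ring_1 mpoly"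
proof -
  have "p * sg M 1 = (\<Sum>m\<in>ks p. sg m (lk p m)) * sg M 1" by (simp only: pm_expand[symmetric])
  also have "\<dots> = (\<Sum>m\<in>ks p. sg (m + M) (lk p m))" by (simp add: sum_distrib_right mult_single)
  finally show ?thesis by (simp add: lookup_sum lookup_single)
qed

lemma xm_lookup: "lk (xm a b c) (X 1) = a" "lk (xm a b c) (X 2) = b" "lk (xm a b c) (X 3) = c"
  by (simp_all add: xm_def lookup_add lookup_single)

lemma sep_lookup:
  assumes p: "noX p" and mu: "\<forall>r. lk \<mu> (X r) = 0"
  shows "lk (p * xmon a b c) (\<mu> + xm a' b' c') = (if a = a' \<and> b = b' \<and> c = c' then lk p \<mu> else 0)"
proof -
  have key: "m + xm a b c = \<mu> + xm a' b' c' \<longleftrightarrow> (m = \<mu> \<and> a = a' \<and> b = b' \<and> c = c')" if m: "m \<in> ks p" for m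
  proof
    assume e: "m + xm a b c = \<mu> + xm a' b' c'"
    have mx: "\<forall>r. lk m (X r) = 0" using p m by (auto simp: noX_def)
    have "lk (m + xm a b c) (X 1) = lk (\<mu> + xm a' b' c') (X 1)"
      "lk (m + xm a b c) (X 2) = lk (\<mu> + xm a' b' c') (X 2)"
      "lk (m + xm a b c) (X 3) = lk (\<mu> + xm a' b' c') (X 3)" using e by simp_all
    then have abc: "a = a' \<and> b = b' \<and> c = c'" using mx mu by (simp add: lookup_add xm_def lookup_single)
    then have "m = \<mu>" using e by simp
    with abc show "m = \<mu> \<and> a = a' \<and> b = b' \<and> c = c'" by simp
  qed auto
  have "lk (p * xmon a b c) (\<mu> + xm a' b' c') = (\<Sum>m\<in>ks p. (lk p m when m = \<mu> \<and> a = a' \<and> b = b' \<and> c = c'))"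
    unfolding xmon_single lookup_mult_single1
    by (rule sum.cong) (auto simp: key)
  also have "\<dots> = (if a = a' \<and> b = b' \<and> c = c' then lk p \<mu> else 0)"
    by (cases "\<mu> \<in> ks p") (auto simp: when_def in_keys_iff)
  finally show ?thesis .
qed


definition xmd :: "nat \<Rightarrow> nat \<times> nat \<Rightarrow> 'k::comm_ring_1 mpoly" where
  "xmd d \<beta> = xmon (d - (fst \<beta> + snd \<beta>)) (fst \<beta>) (snd \<beta>)"
definition ymd :: "nat \<Rightarrow> nat \<times> nat \<Rightarrow> 'k::comm_ring_1 mpoly" where
  "ymd d \<beta> = ymon (d - (fst \<beta> + snd \<beta>)) (fst \<beta>) (snd \<beta>)"
definition xmm :: "nat \<Rightarrow> nat \<times> nat \<Rightarrow> var \<Rightarrow>\<^sub>0 nat" where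
  "xmm d \<beta> = xm (d - (fst \<beta> + snd \<beta>)) (fst \<beta>) (snd \<beta>)"

fun sig :: "sl3 \<Rightarrow> nat \<times> nat \<Rightarrow> nat \<times> nat" where
  "sig D1 (i, j) = (i + 1, j)"
| "sig D2 (i, j) = (i - 1, j + 1)"
| "sig D3 (i, j) = (i, j + 1)"
| "sig hD1 (i, j) = (i - 1, j)"
| "sig hD2 (i, j) = (i + 1, j - 1)"
| "sig hD3 (i, j) = (i, j - 1)"
| "sig H1 (i, j) = (i, j)"
| "sig H2 (i, j) = (i, j)"

fun kap :: "nat \<Rightarrow> sl3 \<Rightarrow> nat \<times> nat \<Rightarrow> 'k::comm_ring_1" where
  "kap d D1 (i, j) = - of_nat (d - (i + j))"
| "kap d D2 (i, j) = - of_nat i"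
| "kap d D3 (i, j) = - of_nat (d - (i + j))"
| "kap d hD1 (i, j) = - of_nat i"
| "kap d hD2 (i, j) = - of_nat j"
| "kap d hD3 (i, j) = - of_nat j"
| "kap d H1 (i, j) = of_nat i - of_nat (d - (i + j))"
| "kap d H2 (i, j) = of_nat j - of_nat i"

fun sigY :: "sl3 \<Rightarrow> nat \<times> nat \<Rightarrow> nat \<times> nat" where
  "sigY D1 (i, j) = (i - 1, j)"
| "sigY D2 (i, j) = (i + 1, j - 1)"
| "sigY D3 (i, j) = (i, j - 1)"
| "sigY hD1 (i, j) = (i + 1, j)"
| "sigY hD2 (i, j) = (i - 1, j + 1)"
| "sigY hD3 (i, j) = (i, j + 1)"
| "sigY H1 (i, j) = (i, j)"
| "sigY H2 (i, j) = (i, j)"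

fun kapY :: "nat \<Rightarrow> sl3 \<Rightarrow> nat \<times> nat \<Rightarrow> 'k::comm_ring_1" where
  "kapY d D1 (i, j) = of_nat i"
| "kapY d D2 (i, j) = of_nat j"
| "kapY d D3 (i, j) = of_nat j"
| "kapY d hD1 (i, j) = of_nat (d - (i + j))"
| "kapY d hD2 (i, j) = of_nat i"
| "kapY d hD3 (i, j) = of_nat (d - (i + j))"
| "kapY d H1 (i, j) = of_nat (d - (i + j)) - of_nat i"
| "kapY d H2 (i, j) = of_nat i - of_nat j"

lemma act_pow: "act n g (p ^ a) = of_nat a * p ^ (a - 1) * act n g (p::'k::comm_ring_1 mpoly)"
  by (cases a) (simp_all only: act_power, simp_all)

lemma act_xmon: "act n g (xmon a b c :: 'k::comm_ring_1 mpoly) =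
   of_nat a * Var (X 1) ^ (a - 1) * on_var n g (X 1) * Var (X 2) ^ b * Var (X 3) ^ c
 + of_nat b * Var (X 1) ^ a * Var (X 2) ^ (b - 1) * on_var n g (X 2) * Var (X 3) ^ c
 + of_nat c * Var (X 1) ^ a * Var (X 2) ^ b * Var (X 3) ^ (c - 1) * on_var n g (X 3)"
  unfolding xmon_def by (simp add: act_mult act_pow act_Var algebra_simps)

lemma act_ymon: "act n g (ymon a b c :: 'k::comm_ring_1 mpoly) =
   of_nat a * Var (Y 1) ^ (a - 1) * on_var n g (Y 1) * Var (Y 2) ^ b * Var (Y 3) ^ c
 + of_nat b * Var (Y 1) ^ a * Var (Y 2) ^ (b - 1) * on_var n g (Y 2) * Var (Y 3) ^ c
 + of_nat c * Var (Y 1) ^ a * Var (Y 2) ^ b * Var (Y 3) ^ (c - 1) * on_var n g (Y 3)"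
  unfolding ymon_def by (simp add: act_mult act_pow act_Var algebra_simps)

lemma smult_alt: "smult c p = const c * (p :: 'k::comm_ring_1 mpoly)" by (rule smult_const)

lemmas csimps = smult_const const_neg const_of_nat const_add const_diff algebra_simps

lemma xD1: "act n D1 (xmon a b c :: 'k::comm_ring_1 mpoly) = smult (- of_nat a) (xmon (a - 1) (b + 1) c)"
  by (simp add: act_xmon, cases a) (simp_all add: xmon_def csimps)
lemma xD2: "act n D2 (xmon a b c :: 'k::comm_ring_1 mpoly) = smult (- of_nat b) (xmon a (b - 1) (c + 1))"
  by (simp add: act_xmon, cases b) (simp_all add: xmon_def csimps)
lemma xD3: "act n D3 (xmon a b c :: 'k::comm_ring_1 mpoly) = smult (- of_nat a) (xmon (a - 1) b (c + 1))"
  by (simp add: act_xmon, cases a) (simp_all add: xmon_def csimps)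
lemma xhD1: "act n hD1 (xmon a b c :: 'k::comm_ring_1 mpoly) = smult (- of_nat b) (xmon (a + 1) (b - 1) c)"
  by (simp add: act_xmon, cases b) (simp_all add: xmon_def csimps)
lemma xhD2: "act n hD2 (xmon a b c :: 'k::comm_ring_1 mpoly) = smult (- of_nat c) (xmon a (b + 1) (c - 1))"
  by (simp add: act_xmon, cases c) (simp_all add: xmon_def csimps)
lemma xhD3: "act n hD3 (xmon a b c :: 'k::comm_ring_1 mpoly) = smult (- of_nat c) (xmon (a + 1) b (c - 1))"
  by (simp add: act_xmon, cases c) (simp_all add: xmon_def csimps)
lemma xH1: "act n H1 (xmon a b c :: 'k::comm_ring_1 mpoly) = smult (of_nat b - of_nat a) (xmon a b c)"
  apply (simp add: act_xmon)
  apply (cases a; cases b)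
  apply (simp_all add: xmon_def csimps)
  done
lemma xH2: "act n H2 (xmon a b c :: 'k::comm_ring_1 mpoly) = smult (of_nat c - of_nat b) (xmon a b c)"
  apply (simp add: act_xmon)
  apply (cases b; cases c)
  apply (simp_all add: xmon_def csimps)
  done

lemma yD1: "act n D1 (ymon a b c :: 'k::comm_ring_1 mpoly) = smult (of_nat b) (ymon (a + 1) (b - 1) c)"
  by (simp add: act_ymon, cases b) (simp_all add: ymon_def csimps)
lemma yD2: "act n D2 (ymon a b c :: 'k::comm_ring_1 mpoly) = smult (of_nat c) (ymon a (b + 1) (c - 1))"
  by (simp add: act_ymon, cases c) (simp_all add: ymon_def csimps)
lemma yD3: "act n D3 (ymon a b c :: 'k::comm_ring_1 mpoly) = smult (of_nat c) (ymon (a + 1) b (c - 1))"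
  by (simp add: act_ymon, cases c) (simp_all add: ymon_def csimps)
lemma yhD1: "act n hD1 (ymon a b c :: 'k::comm_ring_1 mpoly) = smult (of_nat a) (ymon (a - 1) (b + 1) c)"
  by (simp add: act_ymon, cases a) (simp_all add: ymon_def csimps)
lemma yhD2: "act n hD2 (ymon a b c :: 'k::comm_ring_1 mpoly) = smult (of_nat b) (ymon a (b - 1) (c + 1))"
  by (simp add: act_ymon, cases b) (simp_all add: ymon_def csimps)
lemma yhD3: "act n hD3 (ymon a b c :: 'k::comm_ring_1 mpoly) = smult (of_nat a) (ymon (a - 1) b (c + 1))"
  by (simp add: act_ymon, cases a) (simp_all add: ymon_def csimps)
lemma yH1: "act n H1 (ymon a b c :: 'k::comm_ring_1 mpoly) = smult (of_nat a - of_nat b) (ymon a b c)"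
  apply (simp add: act_ymon)
  apply (cases a; cases b)
  apply (simp_all add: ymon_def csimps)
  done
lemma yH2: "act n H2 (ymon a b c :: 'k::comm_ring_1 mpoly) = smult (of_nat b - of_nat c) (ymon a b c)"
  apply (simp add: act_ymon)
  apply (cases b; cases c)
  apply (simp_all add: ymon_def csimps)
  done


lemma act_xmd:
  assumes "i + j \<le> d"
  shows "act n g (xmd d (i, j) :: 'k::comm_ring_1 mpoly) = smult (kap d g (i, j)) (xmd d (sig g (i, j)))"
proof -
  have e: "d - (i + j) - 1 = d - (Suc i + j)" "d - (i + j) - 1 = d - (i + Suc j)" by arith+
  show ?thesis
  proof (cases g)
    case D1 then show ?thesis by (simp add: xmd_def xD1 e)
  next
    case D2 then show ?thesis by (cases i) (simp_all add: xmd_def xD2)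
  next
    case D3 then show ?thesis by (simp add: xmd_def xD3 e)
  next
    case hD1 then show ?thesis using assms by (cases i) (simp_all add: xmd_def xhD1 Suc_diff_Suc)
  next
    case hD2 then show ?thesis by (cases j) (simp_all add: xmd_def xhD2)
  next
    case hD3 then show ?thesis using assms by (cases j) (simp_all add: xmd_def xhD3 Suc_diff_Suc)
  next
    case H1 then show ?thesis by (simp add: xmd_def xH1)
  next
    case H2 then show ?thesis by (simp add: xmd_def xH2)
  qed
qed

lemma act_ymd:
  assumes "i + j \<le> d"
  shows "act n g (ymd d (i, j) :: 'k::comm_ring_1 mpoly) = smult (kapY d g (i, j)) (ymd d (sigY g (i, j)))"
proof -
  have e: "d - (i + j) - 1 = d - (Suc i + j)" "d - (i + j) - 1 = d - (i + Suc j)" by arith+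
  show ?thesis
  proof (cases g)
    case D1 then show ?thesis using assms by (cases i) (simp_all add: ymd_def yD1 Suc_diff_Suc)
  next
    case D2 then show ?thesis by (cases j) (simp_all add: ymd_def yD2)
  next
    case D3 then show ?thesis using assms by (cases j) (simp_all add: ymd_def yD3 Suc_diff_Suc)
  next
    case hD1 then show ?thesis by (simp add: ymd_def yhD1 e)
  next
    case hD2 then show ?thesis by (cases i) (simp_all add: ymd_def yhD2)
  next
    case hD3 then show ?thesis by (simp add: ymd_def yhD3 e)
  next
    case H1 then show ?thesis by (simp add: ymd_def yH1)
  next
    case H2 then show ?thesis by (simp add: ymd_def yH2)
  qed
qed


lemma noX_lookup_zero: assumes "noX p" "\<not> (\<forall>r. lk \<nu> (X r) = 0)" shows "lk p \<nu> = 0"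
proof (rule ccontr)
  assume "lk p \<nu> \<noteq> 0"
  then have "\<nu> \<in> ks p" by (simp add: in_keys_iff)
  then show False using assms unfolding noX_def by blast
qed

lemma sep_xmd:
  assumes "noX p" "\<forall>r. lk \<nu> (X r) = 0"
  shows "lk (p * xmd d \<gamma>) (\<nu> + xmm d \<beta>) = (if \<gamma> = \<beta> then lk p \<nu> else 0)"
  unfolding xmd_def xmm_def using sep_lookup[OF assms]
  by (cases \<gamma>; cases \<beta>) auto

lemma act_xmd': "\<beta> \<in> idx d \<Longrightarrow> act n g (xmd d \<beta> :: 'k::comm_ring_1 mpoly) = smult (kap d g \<beta>) (xmd d (sig g \<beta>))"
  by (cases \<beta>) (simp add: act_xmd idx_def)
lemma act_ymd': "\<beta> \<in> idx d \<Longrightarrow> act n g (ymd d \<beta> :: 'k::comm_ring_1 mpoly) = smult (kapY d g \<beta>) (ymd d (sigY g \<beta>))"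
  by (cases \<beta>) (simp add: act_ymd idx_def)

lemma finite_idx[simp]: "finite (idx d)"
proof -
  have "idx d \<subseteq> {0..d} \<times> {0..d}" by (auto simp: idx_def)
  then show ?thesis by (rule finite_subset) simp
qed

definition kapU :: "nat \<Rightarrow> sl3 \<Rightarrow> nat \<times> nat \<Rightarrow> 'k::comm_ring_1" where
  "kapU d g \<beta>0 = (if sigY g \<beta>0 \<in> idx d \<and> sig g (sigY g \<beta>0) = \<beta>0 then - kap d g (sigY g \<beta>0) else 0)"

lemma sig_inv: "\<beta> \<in> idx d \<Longrightarrow> sig g \<beta> = \<beta>0 \<Longrightarrow> kap d g \<beta> \<noteq> (0::'k::{comm_ring_1,ring_char_0}) \<Longrightarrow> \<beta> = sigY g \<beta>0"
  by (cases g; cases \<beta>; cases \<beta>0) (auto simp: idx_def)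

lemma collapse:
  fixes u :: "nat \<times> nat \<Rightarrow> 'k::{comm_ring_1,ring_char_0} mpoly"
  shows "(\<Sum>\<beta>\<in>idx d. smult (- kap d g \<beta> * (if sig g \<beta> = \<beta>0 then 1 else 0)) (u \<beta>))
     = smult (kapU d g \<beta>0) (u (sigY g \<beta>0))"
proof -
  let ?b = "sigY g \<beta>0"
  let ?F = "\<lambda>\<beta>. smult (- kap d g \<beta> * (if sig g \<beta> = \<beta>0 then 1 else 0)) (u \<beta>)"
  have "(\<Sum>\<beta>\<in>idx d. ?F \<beta>) = (\<Sum>\<beta>\<in>idx d. if \<beta> = ?b then ?F ?b else 0)"
  proof (rule sum.cong[OF refl])
    fix \<beta> assume b: "\<beta> \<in> idx d"
    show "?F \<beta> = (if \<beta> = ?b then ?F ?b else 0)"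
    proof (cases "\<beta> = ?b")
      case False
      have k: "kap d g \<beta> = (0::'k)" if s: "sig g \<beta> = \<beta>0"
      proof (rule ccontr)
        assume nz: "kap d g \<beta> \<noteq> (0::'k)"
        have "\<beta> = ?b" by (rule sig_inv[OF b s nz])
        then show False using False by simp
      qed
      have "?F \<beta> = 0"
      proof (cases "sig g \<beta> = \<beta>0")
        case True then show ?thesis using k by simp
      qed simp
      then show ?thesis using False by simp
    qed simp
  qed
  also have "\<dots> = (if ?b \<in> idx d then ?F ?b else 0)"
    by (rule sum.delta[OF finite_idx])
  also have "\<dots> = smult (kapU d g \<beta>0) (u ?b)"
    by (auto simp: kapU_def)
  finally show ?thesis .
qed

locale cov =
  fixes n d :: nat and f :: "'k::field_char_0 mpoly" and b :: "nat \<Rightarrow> nat \<Rightarrow> 'k mpoly"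
  assumes b_in_KA: "\<And>i j. i + j \<le> d \<Longrightarrow> in_KA n (b i j)"
    and f_eq: "f = (\<Sum>(i, j)\<in>idx d.
          smult (of_nat (fact d) / of_nat (fact i * fact j * fact (d - (i + j))))
            (b i j * xmon (d - (i + j)) i j))"
    and irr: "irreducible_covariant n f"
begin

definition cc :: "nat \<times> nat \<Rightarrow> 'k" where
  "cc \<beta> = of_nat (fact d) / of_nat (fact (fst \<beta>) * fact (snd \<beta>) * fact (d - (fst \<beta> + snd \<beta>)))"

definition u :: "nat \<times> nat \<Rightarrow> 'k mpoly" where
  "u \<beta> = smult (cc \<beta>) (b (fst \<beta>) (snd \<beta>))"

lemma cc_nz: "cc \<beta> \<noteq> 0"
  by (simp add: cc_def)


lemma f_u: "f = (\<Sum>\<beta>\<in>idx d. u \<beta> * xmd d \<beta>)"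
  unfolding f_eq u_def cc_def xmd_def
  by (rule sum.cong[OF refl]) (auto simp: smult_mult_l)

lemma noX_u: "\<beta> \<in> idx d \<Longrightarrow> noX (u \<beta>)"
  unfolding u_def by (cases \<beta>) (simp add: idx_def, rule noX_smult, rule in_KA_noX[of n], rule b_in_KA, simp)

lemma act_f: "act n g f = 0"
  using irr by (simp add: irreducible_covariant_def is_covariant_def)

lemma f_nz: "f \<noteq> 0"
proof
  assume "f = 0"
  moreover have "(0::'k mpoly) \<in> gen_alg S" for S using gen_alg.gen_const[of 0 S] by simp
  ultimately show False using irr by (auto simp: irreducible_covariant_def)
qed

lemma urel:
  assumes b0: "\<beta>0 \<in> idx d"
  shows "act n g (u \<beta>0) = (\<Sum>\<beta>\<in>idx d. smult (- kap d g \<beta> * (if sig g \<beta> = \<beta>0 then 1 else 0)) (u \<beta>))"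
    (is "_ = ?R")
proof (rule poly_mapping_eqI)
  fix \<nu>
  show "lk (act n g (u \<beta>0)) \<nu> = lk ?R \<nu>"
  proof (cases "\<forall>r. lk \<nu> (X r) = 0")
    case False
    have "noX ?R" by (intro noX_sum noX_smult noX_u)
    then show ?thesis using False noX_act[OF noX_u[OF b0]] by (simp add: noX_lookup_zero)
  next
    case nu: True
    have ex: "act n g f = (\<Sum>\<beta>\<in>idx d. act n g (u \<beta>) * xmd d \<beta>) +
        (\<Sum>\<beta>\<in>idx d. smult (kap d g \<beta>) (u \<beta> * xmd d (sig g \<beta>)))"
    proof -
      have "act n g f = (\<Sum>\<beta>\<in>idx d. act n g (u \<beta>) * xmd d \<beta>) + (\<Sum>\<beta>\<in>idx d. u \<beta> * act n g (xmd d \<beta>))"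
        by (simp only: f_u act_sum act_mult sum.distrib)
      also have "(\<Sum>\<beta>\<in>idx d. u \<beta> * act n g (xmd d \<beta>)) = (\<Sum>\<beta>\<in>idx d. smult (kap d g \<beta>) (u \<beta> * xmd d (sig g \<beta>)))"
        by (rule sum.cong[OF refl]) (simp add: act_xmd' smult_mult_r)
      finally show ?thesis .
    qed
    have l1: "lk (\<Sum>\<beta>\<in>idx d. act n g (u \<beta>) * xmd d \<beta>) (\<nu> + xmm d \<beta>0) = lk (act n g (u \<beta>0)) \<nu>"
      using b0 by (simp add: lookup_sum sep_xmd[OF noX_act[OF noX_u] nu] sum.delta' cong: if_cong)
    have l2: "lk (\<Sum>\<beta>\<in>idx d. smult (kap d g \<beta>) (u \<beta> * xmd d (sig g \<beta>))) (\<nu> + xmm d \<beta>0)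
        = (\<Sum>\<beta>\<in>idx d. kap d g \<beta> * (if sig g \<beta> = \<beta>0 then lk (u \<beta>) \<nu> else 0))"
      by (simp add: lookup_sum lookup_smult sep_xmd[OF noX_u nu] cong: if_cong)
    have "0 = lk (act n g f) (\<nu> + xmm d \<beta>0)" by (simp add: act_f)
    also have "\<dots> = lk (act n g (u \<beta>0)) \<nu> + (\<Sum>\<beta>\<in>idx d. kap d g \<beta> * (if sig g \<beta> = \<beta>0 then lk (u \<beta>) \<nu> else 0))"
      by (simp only: ex lookup_add l1 l2)
    finally have "lk (act n g (u \<beta>0)) \<nu> = - (\<Sum>\<beta>\<in>idx d. kap d g \<beta> * (if sig g \<beta> = \<beta>0 then lk (u \<beta>) \<nu> else 0))"
      by (simp add: eq_neg_iff_add_eq_0 add.commute)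
    also have "\<dots> = lk ?R \<nu>"
      by (auto simp: lookup_sum lookup_smult sum_negf[symmetric] intro!: sum.cong)
    finally show ?thesis .
  qed
qed

lemma uact: assumes "\<beta>0 \<in> idx d" shows "act n g (u \<beta>0) = smult (kapU d g \<beta>0) (u (sigY g \<beta>0))"
  by (subst urel[OF assms]) (rule collapse)

end


lemma funpow_act_smult: "(act n g ^^ k) (smult c p) = smult c ((act n g ^^ k) (p::'k::comm_ring_1 mpoly))"
  by (induction k) (auto simp: act_smult)
lemma funpow_act_zero: "(act n g ^^ k) 0 = (0::'k::comm_ring_1 mpoly)"
  by (induction k) auto
lemma funpow_act_add: "(act n g ^^ k) (p + q) = (act n g ^^ k) p + (act n g ^^ k) (q::'k::comm_ring_1 mpoly)"
  by (induction k) (auto simp: act_add)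
lemma funpow_act_sum: "(act n g ^^ k) (\<Sum>i\<in>I. f i) = (\<Sum>i\<in>I. (act n g ^^ k) (f i :: 'k::comm_ring_1 mpoly))"
  by (induction I rule: infinite_finite_induct) (auto simp: funpow_act_zero funpow_act_add)

lemma smult_cancel: "c \<noteq> 0 \<Longrightarrow> smult c p = 0 \<Longrightarrow> (p::'k::field mpoly) = 0"
  using smult_smult[of "inverse c" c p] by simp

context cov begin

lemma one_plus_of_nat_nz[simp]: "1 + of_nat m \<noteq> (0::'k)"
  using of_nat_neq_0[of m, where 'a='k] by simp

lemma uD1: "(i, j) \<in> idx d \<Longrightarrow> act n D1 (u (i, j)) = (if i = 0 then 0 else smult (of_nat (d - (i + j) + 1)) (u (i - 1, j)))"
  by (cases i) (auto simp: uact kapU_def idx_def Suc_diff_Suc)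
lemma uD3: "(i, j) \<in> idx d \<Longrightarrow> act n D3 (u (i, j)) = (if j = 0 then 0 else smult (of_nat (d - (i + j) + 1)) (u (i, j - 1)))"
  by (cases j) (auto simp: uact kapU_def idx_def Suc_diff_Suc)
lemma uhD1: "(i, j) \<in> idx d \<Longrightarrow> act n hD1 (u (i, j)) = (if i + j < d then smult (of_nat (i + 1)) (u (i + 1, j)) else 0)"
  by (auto simp: uact kapU_def idx_def add.commute)
lemma uhD3: "(i, j) \<in> idx d \<Longrightarrow> act n hD3 (u (i, j)) = (if i + j < d then smult (of_nat (j + 1)) (u (i, j + 1)) else 0)"
  by (auto simp: uact kapU_def idx_def add.commute)

lemma hD3_pow: "j \<le> d \<Longrightarrow> (act n hD3 ^^ j) (u (0, 0)) = smult (of_nat (fact j)) (u (0, j))"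
proof (induction j)
  case 0 then show ?case by simp
next
  case (Suc j)
  then have "(act n hD3 ^^ Suc j) (u (0, 0)) = smult (of_nat (fact j)) (act n hD3 (u (0, j)))"
    by (simp add: act_smult)
  also have "\<dots> = smult (of_nat (fact (Suc j))) (u (0, Suc j))"
    using Suc.prems by (simp add: uhD3 idx_def smult_smult algebra_simps)
  finally show ?case .
qed

lemma hD1_pow: "i + j \<le> d \<Longrightarrow> (act n hD1 ^^ i) (u (0, j)) = smult (of_nat (fact i)) (u (i, j))"
proof (induction i)
  case 0 then show ?case by simp
next
  case (Suc i)
  then have "(act n hD1 ^^ Suc i) (u (0, j)) = smult (of_nat (fact i)) (act n hD1 (u (i, j)))"
    by (simp add: act_smult)
  also have "\<dots> = smult (of_nat (fact (Suc i))) (u (Suc i, j))"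
    using Suc.prems by (simp add: uhD1 idx_def smult_smult algebra_simps)
  finally show ?case .
qed

lemma lower: "(i, j) \<in> idx d \<Longrightarrow>
   (act n hD1 ^^ i) ((act n hD3 ^^ j) (u (0, 0))) = smult (of_nat (fact i * fact j)) (u (i, j))"
  by (simp add: idx_def hD3_pow funpow_act_smult hD1_pow smult_smult mult.commute)

lemma D3_pow_le: "(i, j) \<in> idx d \<Longrightarrow> k \<le> j \<Longrightarrow> \<exists>\<gamma>. \<gamma> \<noteq> 0 \<and> (act n D3 ^^ k) (u (i, j)) = smult \<gamma> (u (i, j - k))"
proof (induction k)
  case 0 then show ?case by (intro exI[of _ 1]) simp
next
  case (Suc k)
  then obtain \<gamma> where g: "\<gamma> \<noteq> 0" "(act n D3 ^^ k) (u (i, j)) = smult \<gamma> (u (i, j - k))" by auto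
  have "(act n D3 ^^ Suc k) (u (i, j)) = smult \<gamma> (act n D3 (u (i, j - k)))" using g by (simp add: act_smult)
  also have "\<dots> = smult (\<gamma> * of_nat (d - (i + (j - k)) + 1)) (u (i, j - Suc k))"
    using Suc.prems by (simp add: uD3 idx_def smult_smult)
  finally show ?case using g by (intro exI[of _ "\<gamma> * of_nat (d - (i + (j - k)) + 1)"]) simp
qed

lemma D1_pow_le: "(i, j) \<in> idx d \<Longrightarrow> k \<le> i \<Longrightarrow> \<exists>\<gamma>. \<gamma> \<noteq> 0 \<and> (act n D1 ^^ k) (u (i, j)) = smult \<gamma> (u (i - k, j))"
proof (induction k)
  case 0 then show ?case by (intro exI[of _ 1]) simp
next
  case (Suc k)
  then obtain \<gamma> where g: "\<gamma> \<noteq> 0" "(act n D1 ^^ k) (u (i, j)) = smult \<gamma> (u (i - k, j))" by auto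
  have "(act n D1 ^^ Suc k) (u (i, j)) = smult \<gamma> (act n D1 (u (i - k, j)))" using g by (simp add: act_smult)
  also have "\<dots> = smult (\<gamma> * of_nat (d - ((i - k) + j) + 1)) (u (i - Suc k, j))"
    using Suc.prems by (simp add: uD1 idx_def smult_smult)
  finally show ?case using g by (intro exI[of _ "\<gamma> * of_nat (d - ((i - k) + j) + 1)"]) simp
qed

lemma D3_pow_gt: assumes "(i, j) \<in> idx d" "j < k" shows "(act n D3 ^^ k) (u (i, j)) = 0"
proof -
  obtain \<gamma> where g: "(act n D3 ^^ j) (u (i, j)) = smult \<gamma> (u (i, 0))"
    using D3_pow_le[OF assms(1), of j] by auto
  have k: "k = (k - Suc j) + Suc j" using assms by simp
  have "(act n D3 ^^ Suc j) (u (i, j)) = 0"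
    using assms by (simp add: g act_smult uD3 idx_def)
  then show ?thesis by (subst k, simp only: funpow_add o_apply funpow_act_zero)
qed

lemma D1_pow_gt: assumes "(i, j) \<in> idx d" "i < k" shows "(act n D1 ^^ k) (u (i, j)) = 0"
proof -
  obtain \<gamma> where g: "(act n D1 ^^ i) (u (i, j)) = smult \<gamma> (u (0, j))"
    using D1_pow_le[OF assms(1), of i] by auto
  have k: "k = (k - Suc i) + Suc i" using assms by simp
  have "(act n D1 ^^ Suc i) (u (i, j)) = 0"
    using assms by (simp add: g act_smult uD1 idx_def)
  then show ?thesis by (subst k, simp only: funpow_add o_apply funpow_act_zero)
qed

lemma raise_zero: assumes "(i, j) \<in> idx d" "\<not> (i0 \<le> i \<and> j0 \<le> j)"
  shows "(act n D1 ^^ i0) ((act n D3 ^^ j0) (u (i, j))) = 0"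
proof (cases "j0 \<le> j")
  case False then show ?thesis using D3_pow_gt[OF assms(1), of j0] by (simp add: funpow_act_zero)
next
  case True
  then obtain \<gamma> where g: "(act n D3 ^^ j0) (u (i, j)) = smult \<gamma> (u (i, j - j0))"
    using D3_pow_le[OF assms(1)] by auto
  have "(i, j - j0) \<in> idx d" using assms by (auto simp: idx_def)
  moreover have "i < i0" using True assms(2) by simp
  ultimately show ?thesis using D1_pow_gt[of i "j - j0" i0] by (simp add: g funpow_act_smult)
qed

lemma raise:
  assumes b0: "(i0, j0) \<in> idx d" and l0: "lam (i0, j0) \<noteq> 0"
    and mx: "\<And>i j. (i, j) \<in> idx d \<Longrightarrow> lam (i, j) \<noteq> 0 \<Longrightarrow> i + j \<le> i0 + j0"
  shows "\<exists>\<gamma>. \<gamma> \<noteq> 0 \<and> (act n D1 ^^ i0) ((act n D3 ^^ j0) (\<Sum>\<beta>\<in>idx d. smult (lam \<beta>) (u \<beta>))) = smult \<gamma> (u (0, 0))"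
proof -
  let ?T = "\<lambda>\<beta>. smult (lam \<beta>) ((act n D1 ^^ i0) ((act n D3 ^^ j0) (u \<beta>)))"
  have "(act n D1 ^^ i0) ((act n D3 ^^ j0) (\<Sum>\<beta>\<in>idx d. smult (lam \<beta>) (u \<beta>))) = (\<Sum>\<beta>\<in>idx d. ?T \<beta>)"
    by (simp add: funpow_act_sum funpow_act_smult)
  also have "\<dots> = (\<Sum>\<beta>\<in>idx d. if \<beta> = (i0, j0) then ?T (i0, j0) else 0)"
  proof (rule sum.cong[OF refl])
    fix \<beta> assume b: "\<beta> \<in> idx d"
    obtain i j where ij: "\<beta> = (i, j)" by (cases \<beta>)
    show "?T \<beta> = (if \<beta> = (i0, j0) then ?T (i0, j0) else 0)"
    proof (cases "\<beta> = (i0, j0)")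
      case False
      then have ne: "\<beta> \<noteq> (i0, j0)" .
      show ?thesis
      proof (cases "lam (i, j) = 0")
        case False
        then have "i + j \<le> i0 + j0" using mx b ij by simp
        then have "\<not> (i0 \<le> i \<and> j0 \<le> j)" using ne ij by auto
        have z: "(act n D1 ^^ i0) ((act n D3 ^^ j0) (u (i, j))) = 0"
          by (rule raise_zero) (use b ij \<open>\<not> (i0 \<le> i \<and> j0 \<le> j)\<close> in auto)
        show ?thesis unfolding if_not_P[OF ne] by (simp only: ij z smult_zero_r)
      next
        case True
        show ?thesis unfolding if_not_P[OF ne] by (simp only: ij True smult_zero_l)
      qed
    qed simp
  qed
  also have "\<dots> = ?T (i0, j0)" by (simp only: sum.delta[OF finite_idx] b0 if_True)
  finally have e: "(act n D1 ^^ i0) ((act n D3 ^^ j0) (\<Sum>\<beta>\<in>idx d. smult (lam \<beta>) (u \<beta>))) = ?T (i0, j0)" .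
  obtain \<gamma>1 where g1: "\<gamma>1 \<noteq> 0" "(act n D3 ^^ j0) (u (i0, j0)) = smult \<gamma>1 (u (i0, 0))"
    using D3_pow_le[OF b0, of j0] by auto
  have b1: "(i0, 0) \<in> idx d" using b0 by (simp add: idx_def)
  obtain \<gamma>2 where g2: "\<gamma>2 \<noteq> 0" "(act n D1 ^^ i0) (u (i0, 0)) = smult \<gamma>2 (u (0, 0))"
    using D1_pow_le[OF b1, of i0] by auto
  show ?thesis using e g1 g2 l0
    by (intro exI[of _ "lam (i0, j0) * (\<gamma>1 * \<gamma>2)"]) (simp add: funpow_act_smult smult_smult)
qed

lemma exists_max:
  assumes "\<beta>1 \<in> idx d" "lam \<beta>1 \<noteq> 0"
  shows "\<exists>i0 j0. (i0, j0) \<in> idx d \<and> lam (i0, j0) \<noteq> 0 \<and> (\<forall>i j. (i, j) \<in> idx d \<longrightarrow> lam (i, j) \<noteq> 0 \<longrightarrow> i + j \<le> i0 + j0)"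
proof -
  let ?S = "{\<beta>\<in>idx d. lam \<beta> \<noteq> 0}"
  have fin: "finite ?S" by simp
  have "\<beta>1 \<in> ?S" using assms by simp
  then have ne: "?S \<noteq> {}" by blast
  let ?m = "Max ((\<lambda>\<beta>. fst \<beta> + snd \<beta>) ` ?S)"
  have "?m \<in> (\<lambda>\<beta>. fst \<beta> + snd \<beta>) ` ?S" using fin ne by (intro Max_in) auto
  then obtain \<beta>0 where b0: "\<beta>0 \<in> ?S" "fst \<beta>0 + snd \<beta>0 = ?m" by auto
  have "\<forall>i j. (i, j) \<in> idx d \<longrightarrow> lam (i, j) \<noteq> 0 \<longrightarrow> i + j \<le> fst \<beta>0 + snd \<beta>0"
  proof (intro allI impI)
    fix i j assume "(i, j) \<in> idx d" "lam (i, j) \<noteq> 0"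
    then have "(i, j) \<in> ?S" by simp
    then have "i + j \<in> (\<lambda>\<beta>. fst \<beta> + snd \<beta>) ` ?S" by force
    then have "i + j \<le> ?m" using fin by (intro Max_ge) auto
    then show "i + j \<le> fst \<beta>0 + snd \<beta>0" using b0 by simp
  qed
  then show ?thesis using b0 by (intro exI[of _ "fst \<beta>0"] exI[of _ "snd \<beta>0"]) auto
qed

lemma u_in_idx_zero_if_u00: "u (0, 0) = 0 \<Longrightarrow> \<beta> \<in> idx d \<Longrightarrow> u \<beta> = 0"
proof -
  assume z: "u (0, 0) = 0" and b: "\<beta> \<in> idx d"
  obtain i j where ij: "\<beta> = (i, j)" by (cases \<beta>)
  have "smult (of_nat (fact i * fact j)) (u (i, j)) = 0"
    using lower[of i j] b ij z by (simp add: funpow_act_zero)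
  moreover have nz: "(of_nat (fact i * fact j) :: 'k) \<noteq> 0" by simp
  ultimately have "u (i, j) = 0" using smult_cancel by blast
  then show "u \<beta> = 0" using ij by simp
qed

lemma u00_nz: "u (0, 0) \<noteq> 0"
proof
  assume "u (0, 0) = 0"
  then have z: "\<beta> \<in> idx d \<Longrightarrow> u \<beta> = 0" for \<beta> by (rule u_in_idx_zero_if_u00)
  have "f = 0" unfolding f_u by (rule sum.neutral) (simp add: z)
  then show False using f_nz by simp
qed

lemma u_indep:
  assumes "(\<Sum>\<beta>\<in>idx d. smult (lam \<beta>) (u \<beta>)) = 0" "\<beta>1 \<in> idx d"
  shows "lam \<beta>1 = 0"
proof (rule ccontr)
  assume "lam \<beta>1 \<noteq> 0"
  then obtain i0 j0 where m: "(i0, j0) \<in> idx d" "lam (i0, j0) \<noteq> 0"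
    "\<And>i j. (i, j) \<in> idx d \<Longrightarrow> lam (i, j) \<noteq> 0 \<Longrightarrow> i + j \<le> i0 + j0"
    using exists_max[OF assms(2)] by blast
  obtain \<gamma> where "\<gamma> \<noteq> 0" "(act n D1 ^^ i0) ((act n D3 ^^ j0) (\<Sum>\<beta>\<in>idx d. smult (lam \<beta>) (u \<beta>))) = smult \<gamma> (u (0, 0))"
    using raise[of i0 j0 lam, OF m(1) m(2) m(3)] by blast
  then have "smult \<gamma> (u (0, 0)) = 0" using assms(1) by (simp add: funpow_act_zero)
  then show False using smult_cancel[OF \<open>\<gamma> \<noteq> 0\<close>] u00_nz by blast
qed

end


definition spanI :: "'i set \<Rightarrow> ('i \<Rightarrow> 'k::comm_ring_1 mpoly) \<Rightarrow> 'k mpoly set" where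
  "spanI I g = {p. \<exists>lam. p = (\<Sum>\<beta>\<in>I. smult (lam \<beta>) (g \<beta>))}"

lemma subspace_sum: "subspace V \<Longrightarrow> (\<And>s. s \<in> F \<Longrightarrow> h s \<in> V) \<Longrightarrow> sum h F \<in> V"
  by (induction F rule: infinite_finite_induct) (auto simp: subspace_def)

lemma subspace_spanI: "subspace (spanI I g)"
  unfolding subspace_def spanI_def
proof (intro conjI ballI allI)
  show "0 \<in> {p. \<exists>lam. p = (\<Sum>\<beta>\<in>I. smult (lam \<beta>) (g \<beta>))}"
    by (auto intro!: exI[of _ "\<lambda>_. 0"])
next
  fix p q assume "p \<in> {p. \<exists>lam. p = (\<Sum>\<beta>\<in>I. smult (lam \<beta>) (g \<beta>))}" "q \<in> {p. \<exists>lam. p = (\<Sum>\<beta>\<in>I. smult (lam \<beta>) (g \<beta>))}"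
  then obtain l1 l2 where "p = (\<Sum>\<beta>\<in>I. smult (l1 \<beta>) (g \<beta>))" "q = (\<Sum>\<beta>\<in>I. smult (l2 \<beta>) (g \<beta>))" by auto
  then show "p + q \<in> {p. \<exists>lam. p = (\<Sum>\<beta>\<in>I. smult (lam \<beta>) (g \<beta>))}"
    by (auto intro!: exI[of _ "\<lambda>\<beta>. l1 \<beta> + l2 \<beta>"] simp: smult_add_l sum.distrib)
next
  fix c p assume "p \<in> {p. \<exists>lam. p = (\<Sum>\<beta>\<in>I. smult (lam \<beta>) (g \<beta>))}"
  then obtain l1 where "p = (\<Sum>\<beta>\<in>I. smult (l1 \<beta>) (g \<beta>))" by auto
  then show "smult c p \<in> {p. \<exists>lam. p = (\<Sum>\<beta>\<in>I. smult (lam \<beta>) (g \<beta>))}"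
    by (auto intro!: exI[of _ "\<lambda>\<beta>. c * l1 \<beta>"] simp: smult_sum smult_smult)
qed

lemma spanI_base: "finite I \<Longrightarrow> \<beta>0 \<in> I \<Longrightarrow> g \<beta>0 \<in> spanI I g"
  unfolding spanI_def
  by (rule CollectI, rule exI[of _ "\<lambda>\<beta>. if \<beta> = \<beta>0 then 1 else 0"])
     (simp add: if_distrib[of "\<lambda>c. smult c _"] sum.delta cong: if_cong)

lemma span_eq: assumes fin: "finite I" shows "lin_span (g ` I) = spanI I g"
proof
  show "lin_span (g ` I) \<subseteq> spanI I g"
  proof
    fix p assume "p \<in> lin_span (g ` I)"
    then obtain F c where F: "finite F" "F \<subseteq> g ` I" "p = (\<Sum>s\<in>F. smult (c s) s)"
      unfolding lin_span_def by blast
    have "\<And>s. s \<in> F \<Longrightarrow> smult (c s) s \<in> spanI I g"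
    proof -
      fix s assume "s \<in> F"
      then obtain \<beta> where "\<beta> \<in> I" "s = g \<beta>" using F by auto
      then have "s \<in> spanI I g" using spanI_base[OF fin] by simp
      then show "smult (c s) s \<in> spanI I g" using subspace_spanI unfolding subspace_def by blast
    qed
    then show "p \<in> spanI I g" unfolding F(3) by (rule subspace_sum[OF subspace_spanI])
  qed
next
  show "spanI I g \<subseteq> lin_span (g ` I)"
  proof
    fix p assume "p \<in> spanI I g"
    then obtain lam where p: "p = (\<Sum>\<beta>\<in>I. smult (lam \<beta>) (g \<beta>))" unfolding spanI_def by auto
    have "p = (\<Sum>s\<in>g ` I. \<Sum>\<beta>\<in>{x\<in>I. g x = s}. smult (lam \<beta>) (g \<beta>))"
      unfolding p by (rule sum.image_gen[OF fin])
    also have "\<dots> = (\<Sum>s\<in>g ` I. smult (\<Sum>\<beta>\<in>{x\<in>I. g x = s}. lam \<beta>) s)"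
      by (rule sum.cong[OF refl]) (simp add: sum_smult)
    finally have e: "p = (\<Sum>s\<in>g ` I. smult (\<Sum>\<beta>\<in>{x\<in>I. g x = s}. lam \<beta>) s)" .
    show "p \<in> lin_span (g ` I)"
      unfolding lin_span_def
      by (rule CollectI, rule exI[of _ "g ` I"], rule exI[of _ "\<lambda>s. \<Sum>\<beta>\<in>{x\<in>I. g x = s}. lam \<beta>"])
         (simp add: fin e)
  qed
qed

lemma mon_indep_gen:
  assumes inj: "\<And>\<beta> \<beta>'. \<beta> \<in> I \<Longrightarrow> \<beta>' \<in> I \<Longrightarrow> m \<beta> = m \<beta>' \<Longrightarrow> \<beta> = \<beta>'"
    and fin: "finite I"
    and z: "(\<Sum>\<beta>\<in>I. smult (c \<beta>) (sg (m \<beta>) 1 :: 'k::comm_ring_1 mpoly)) = 0" and b0: "\<beta>0 \<in> I"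
  shows "c \<beta>0 = 0"
proof -
  have "0 = lk (\<Sum>\<beta>\<in>I. smult (c \<beta>) (sg (m \<beta>) 1 :: 'k mpoly)) (m \<beta>0)" using z by simp
  also have "\<dots> = (\<Sum>\<beta>\<in>I. if \<beta> = \<beta>0 then c \<beta>0 else 0)"
    unfolding lookup_sum
  proof (rule sum.cong[OF refl])
    fix \<beta> assume b: "\<beta> \<in> I"
    show "lk (smult (c \<beta>) (sg (m \<beta>) 1 :: 'k mpoly)) (m \<beta>0) = (if \<beta> = \<beta>0 then c \<beta>0 else 0)"
    proof (cases "\<beta> = \<beta>0")
      case False
      then have "m \<beta> \<noteq> m \<beta>0" using inj[OF b b0] by blast
      then show ?thesis using False by (simp add: lookup_smult lookup_single when_def)
    qed (simp add: lookup_smult)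
  qed
  also have "\<dots> = c \<beta>0" using fin b0 by simp
  finally show ?thesis by simp
qed

lemma ymd_indep:
  assumes "(\<Sum>\<beta>\<in>idx d. smult (c \<beta>) (ymd d \<beta> :: 'k::comm_ring_1 mpoly)) = 0" "\<beta>0 \<in> idx d"
  shows "c \<beta>0 = 0"
proof (rule mon_indep_gen[where m = "\<lambda>\<beta>. ym (d - (fst \<beta> + snd \<beta>)) (fst \<beta>) (snd \<beta>)" and I = "idx d"])
  fix \<beta> \<beta>' assume "ym (d - (fst \<beta> + snd \<beta>)) (fst \<beta>) (snd \<beta>) = ym (d - (fst \<beta>' + snd \<beta>')) (fst \<beta>') (snd \<beta>')"
  then have "lk (ym (d - (fst \<beta> + snd \<beta>)) (fst \<beta>) (snd \<beta>)) (Y 2) = lk (ym (d - (fst \<beta>' + snd \<beta>')) (fst \<beta>') (snd \<beta>')) (Y 2)"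
     "lk (ym (d - (fst \<beta> + snd \<beta>)) (fst \<beta>) (snd \<beta>)) (Y 3) = lk (ym (d - (fst \<beta>' + snd \<beta>')) (fst \<beta>') (snd \<beta>')) (Y 3)"
    by simp_all
  then show "\<beta> = \<beta>'" by (simp add: ym_def lookup_add lookup_single prod_eq_iff)
qed (use assms in \<open>simp_all add: ymd_def ymon_single\<close>)

lemma xmd_indep:
  assumes "(\<Sum>\<beta>\<in>idx d. smult (c \<beta>) (xmd d \<beta> :: 'k::comm_ring_1 mpoly)) = 0" "\<beta>0 \<in> idx d"
  shows "c \<beta>0 = 0"
proof (rule mon_indep_gen[where m = "\<lambda>\<beta>. xm (d - (fst \<beta> + snd \<beta>)) (fst \<beta>) (snd \<beta>)" and I = "idx d"])
  fix \<beta> \<beta>' assume "xm (d - (fst \<beta> + snd \<beta>)) (fst \<beta>) (snd \<beta>) = xm (d - (fst \<beta>' + snd \<beta>')) (fst \<beta>') (snd \<beta>')"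
  then have "lk (xm (d - (fst \<beta> + snd \<beta>)) (fst \<beta>) (snd \<beta>)) (X 2) = lk (xm (d - (fst \<beta>' + snd \<beta>')) (fst \<beta>') (snd \<beta>')) (X 2)"
     "lk (xm (d - (fst \<beta> + snd \<beta>)) (fst \<beta>) (snd \<beta>)) (X 3) = lk (xm (d - (fst \<beta>' + snd \<beta>')) (fst \<beta>') (snd \<beta>')) (X 3)"
    by simp_all
  then show "\<beta> = \<beta>'" by (simp add: xm_def lookup_add lookup_single prod_eq_iff)
qed (use assms in \<open>simp_all add: xmd_def xmon_single\<close>)

lemma ymon_set: "{ymon a b c | a b c. a + b + c = d} = ymd d ` idx d"
proof
  show "{ymon a b c | a b c. a + b + c = d} \<subseteq> ymd d ` idx d"
  proof
    fix p assume "p \<in> {ymon a b c | a b c. a + b + c = d}"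
    then obtain a b c where "p = ymon a b c" "a + b + c = d" by auto
    then show "p \<in> ymd d ` idx d" by (intro image_eqI[of _ _ "(b, c)"]) (auto simp: ymd_def idx_def)
  qed
next
  show "ymd d ` idx d \<subseteq> {ymon a b c | a b c. a + b + c = d}"
  proof
    fix p assume "p \<in> ymd d ` idx d"
    then obtain i j where "(i, j) \<in> idx d" "p = ymd d (i, j)" by auto
    then show "p \<in> {ymon a b c | a b c. a + b + c = d}"
      by (intro CollectI exI[of _ "d - (i + j)"] exI[of _ i] exI[of _ j]) (auto simp: ymd_def idx_def)
  qed
qed

lemma xmon_set: "{xmon a b c | a b c. a + b + c = d} = xmd d ` idx d"
proof
  show "{xmon a b c | a b c. a + b + c = d} \<subseteq> xmd d ` idx d"
  proof
    fix p assume "p \<in> {xmon a b c | a b c. a + b + c = d}"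
    then obtain a b c where "p = xmon a b c" "a + b + c = d" by auto
    then show "p \<in> xmd d ` idx d" by (intro image_eqI[of _ _ "(b, c)"]) (auto simp: xmd_def idx_def)
  qed
next
  show "xmd d ` idx d \<subseteq> {xmon a b c | a b c. a + b + c = d}"
  proof
    fix p assume "p \<in> xmd d ` idx d"
    then obtain i j where "(i, j) \<in> idx d" "p = xmd d (i, j)" by auto
    then show "p \<in> {xmon a b c | a b c. a + b + c = d}"
      by (intro CollectI exI[of _ "d - (i + j)"] exI[of _ i] exI[of _ j]) (auto simp: xmd_def idx_def)
  qed
qed


lemma sig_idx: "\<beta> \<in> idx d \<Longrightarrow> kap d g \<beta> \<noteq> (0::'k::{comm_ring_1,ring_char_0}) \<Longrightarrow> sig g \<beta> \<in> idx d"
  by (cases g; cases \<beta>) (auto simp: idx_def simp del: of_nat_diff)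

context cov begin

definition V :: "'k mpoly set" where "V = spanI (idx d) u"

lemma Bset: "{b i j | i j. i + j \<le> d} = (\<lambda>\<beta>. b (fst \<beta>) (snd \<beta>)) ` idx d"
  unfolding idx_def by (auto simp: image_iff; blast)

lemma V_eq: "lin_span {b i j | i j. i + j \<le> d} = V"
proof -
  have "lin_span {b i j | i j. i + j \<le> d} = spanI (idx d) (\<lambda>\<beta>. b (fst \<beta>) (snd \<beta>))"
    unfolding Bset by (rule span_eq[OF finite_idx])
  also have "\<dots> = V"
  proof -
    have e1: "(\<Sum>\<beta>\<in>idx d. smult (lam \<beta>) (b (fst \<beta>) (snd \<beta>))) = (\<Sum>\<beta>\<in>idx d. smult (lam \<beta> / cc \<beta>) (u \<beta>))" for lam
      by (rule sum.cong[OF refl]) (simp add: u_def smult_smult cc_nz)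
    have e2: "(\<Sum>\<beta>\<in>idx d. smult (lam \<beta>) (u \<beta>)) = (\<Sum>\<beta>\<in>idx d. smult (lam \<beta> * cc \<beta>) (b (fst \<beta>) (snd \<beta>)))" for lam
      by (rule sum.cong[OF refl]) (simp add: u_def smult_smult)
    show ?thesis unfolding V_def spanI_def
    proof (intro set_eqI iffI)
      fix p assume "p \<in> {p. \<exists>lam. p = (\<Sum>\<beta>\<in>idx d. smult (lam \<beta>) (b (fst \<beta>) (snd \<beta>)))}"
      then obtain lam where "p = (\<Sum>\<beta>\<in>idx d. smult (lam \<beta>) (b (fst \<beta>) (snd \<beta>)))" by blast
      then show "p \<in> {p. \<exists>lam. p = (\<Sum>\<beta>\<in>idx d. smult (lam \<beta>) (u \<beta>))}" unfolding e1 by (intro CollectI exI[of _ "\<lambda>\<beta>. lam \<beta> / cc \<beta>"]) simp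
    next
      fix p assume "p \<in> {p. \<exists>lam. p = (\<Sum>\<beta>\<in>idx d. smult (lam \<beta>) (u \<beta>))}"
      then obtain lam where "p = (\<Sum>\<beta>\<in>idx d. smult (lam \<beta>) (u \<beta>))" by blast
      then show "p \<in> {p. \<exists>lam. p = (\<Sum>\<beta>\<in>idx d. smult (lam \<beta>) (b (fst \<beta>) (snd \<beta>)))}" unfolding e2 by (intro CollectI exI[of _ "\<lambda>\<beta>. lam \<beta> * cc \<beta>"]) simp
    qed
  qed
  finally show ?thesis .
qed

lemma u_in_V: "\<beta> \<in> idx d \<Longrightarrow> u \<beta> \<in> V"
  unfolding V_def by (rule spanI_base[OF finite_idx])

lemma V_sub: "subspace V" unfolding V_def by (rule subspace_spanI)

lemma V_smult: "v \<in> V \<Longrightarrow> smult c v \<in> V" using V_sub by (simp add: subspace_def)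
lemma V_add: "v \<in> V \<Longrightarrow> w \<in> V \<Longrightarrow> v + w \<in> V" using V_sub by (simp add: subspace_def)
lemma V_zero: "0 \<in> V" using V_sub by (simp add: subspace_def)

lemma kapU_idx: "kapU d g \<beta> \<noteq> 0 \<Longrightarrow> sigY g \<beta> \<in> idx d"
  by (auto simp: kapU_def split: if_splits)

lemma act_u_V: "\<beta> \<in> idx d \<Longrightarrow> act n g (u \<beta>) \<in> V"
  by (cases "kapU d g \<beta> = (0::'k)") (auto simp: uact V_zero intro!: V_smult u_in_V kapU_idx)

lemma V_elem: "v \<in> V \<Longrightarrow> \<exists>lam. v = (\<Sum>\<beta>\<in>idx d. smult (lam \<beta>) (u \<beta>))"
  unfolding V_def spanI_def by simp

lemma act_V: "v \<in> V \<Longrightarrow> act n g v \<in> V"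
proof -
  assume "v \<in> V"
  then obtain lam where v: "v = (\<Sum>\<beta>\<in>idx d. smult (lam \<beta>) (u \<beta>))" using V_elem by blast
  have "act n g v = (\<Sum>\<beta>\<in>idx d. smult (lam \<beta>) (act n g (u \<beta>)))"
    by (simp add: v act_sum act_smult)
  also have "\<dots> \<in> V" by (rule subspace_sum[OF V_sub]) (simp add: V_smult act_u_V)
  finally show ?thesis .
qed

lemma module_V: "sl3_module n V"
  unfolding sl3_module_def using V_sub act_V by blast

lemma funpow_in: "sl3_module n W \<Longrightarrow> w \<in> W \<Longrightarrow> (act n g ^^ k) w \<in> W"
  by (induction k) (auto simp: sl3_module_def)

lemma sum_zero_coeffs: "(\<Sum>\<beta>\<in>idx d. smult (lam \<beta>) (u \<beta>)) \<noteq> 0 \<Longrightarrow> \<exists>\<beta>\<in>idx d. lam \<beta> \<noteq> 0"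
  by (metis (no_types, lifting) smult_zero_l sum.neutral)

lemma irreducible_V: "irreducible_module n V"
  unfolding irreducible_module_def
proof (intro conjI allI impI)
  show "sl3_module n V" by (rule module_V)
  show "V \<noteq> {0}" using u_in_V[of "(0, 0)"] u00_nz by (auto simp: idx_def)
  fix W assume W: "W \<subseteq> V \<and> sl3_module n W"
  have Ws: "subspace W" using W by (simp add: sl3_module_def)
  show "W = {0} \<or> W = V"
  proof (cases "W = {0}")
    case False
    have "0 \<in> W" using Ws by (simp add: subspace_def)
    then obtain w where w: "w \<in> W" "w \<noteq> 0" using False by blast
    then obtain lam where wl: "w = (\<Sum>\<beta>\<in>idx d. smult (lam \<beta>) (u \<beta>))" using W V_elem by blast
    then obtain \<beta>1 where b1: "\<beta>1 \<in> idx d" "lam \<beta>1 \<noteq> 0" using sum_zero_coeffs w by blast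
    obtain i0 j0 where m: "(i0, j0) \<in> idx d" "lam (i0, j0) \<noteq> 0"
      "\<And>i j. (i, j) \<in> idx d \<Longrightarrow> lam (i, j) \<noteq> 0 \<Longrightarrow> i + j \<le> i0 + j0"
      using exists_max[of \<beta>1 lam, OF b1] by blast
    obtain \<gamma> where g: "\<gamma> \<noteq> 0" "(act n D1 ^^ i0) ((act n D3 ^^ j0) w) = smult \<gamma> (u (0, 0))"
      using raise[of i0 j0 lam, OF m(1) m(2) m(3)] wl by blast
    have "smult \<gamma> (u (0, 0)) \<in> W" using g(2) funpow_in[OF _ funpow_in[OF _ w(1)]] W by metis
    then have "smult (inverse \<gamma>) (smult \<gamma> (u (0, 0))) \<in> W" using Ws by (simp add: subspace_def)
    then have u0: "u (0, 0) \<in> W" using g(1) by (simp add: smult_smult)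
    have uW: "u \<beta> \<in> W" if b: "\<beta> \<in> idx d" for \<beta>
    proof -
      obtain i j where ij: "\<beta> = (i, j)" by (cases \<beta>)
      define c where "c = (of_nat (fact i * fact j) :: 'k)"
      have cnz: "c \<noteq> 0" by (simp add: c_def)
      have "smult c (u (i, j)) \<in> W"
        unfolding c_def using lower[of i j] b ij funpow_in[OF _ funpow_in[OF _ u0]] W by metis
      then have "smult (inverse c) (smult c (u (i, j))) \<in> W"
        using Ws by (simp add: subspace_def)
      then show ?thesis using ij cnz by (simp add: smult_smult)
    qed
    have "V \<subseteq> W"
    proof
      fix v assume "v \<in> V"
      then obtain mu where v: "v = (\<Sum>\<beta>\<in>idx d. smult (mu \<beta>) (u \<beta>))" using V_elem by blast
      show "v \<in> W" unfolding v
        by (rule subspace_sum[OF Ws]) (use Ws uW in \<open>simp add: subspace_def\<close>)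
    qed
    then show ?thesis using W by blast
  qed simp
qed

end


context cov begin

definition ccw :: "nat \<Rightarrow> nat \<Rightarrow> nat \<Rightarrow> 'k" where
  "ccw i j a = of_nat (fact d) / of_nat (fact i * fact j * fact a)"

lemma cc_ccw: "cc (i, j) = ccw i j (d - (i + j))"
  by (simp add: cc_def ccw_def)

lemma div_cancel_help: assumes x: "x = Suc a * w" shows "of_nat (Suc a) * (F / of_nat x) = F / (of_nat w :: 'k)"
proof (cases "w = 0")
  case True then show ?thesis using x by simp
next
  case False
  have c: "(of_nat (Suc a)::'k) \<noteq> 0" by (rule of_nat_neq_0)
  have w: "(of_nat w::'k) \<noteq> 0" using False by simp
  have "of_nat x = (of_nat (Suc a) * of_nat w :: 'k)" using x by (simp only: of_nat_mult)
  then show ?thesis using c w by (simp add: field_simps del: of_nat_Suc)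
qed

lemma L1: "of_nat (Suc a) * ccw i j (Suc a) = ccw i j a"
  unfolding ccw_def by (rule div_cancel_help) (simp add: algebra_simps)
lemma L2: "of_nat (Suc i) * ccw (Suc i) j a = ccw i j a"
  unfolding ccw_def by (rule div_cancel_help) (simp add: algebra_simps)
lemma L3: "of_nat (Suc j) * ccw i (Suc j) a = ccw i j a"
  unfolding ccw_def by (rule div_cancel_help) (simp add: algebra_simps)

lemma compat_scalar:
  assumes b: "(i, j) \<in> idx d"
  shows "kapU d g (i, j) * cc (sigY g (i, j)) = cc (i, j) * kapY d g (i, j)"
proof -
  have ij: "i + j \<le> d" using b by (simp add: idx_def)
  show ?thesis
  proof (cases g)
    case D1 show ?thesis
    proof (cases i)
      case 0 then show ?thesis using D1 by (simp add: kapU_def)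
    next
      case (Suc i')
      obtain a where a: "d - (i' + j) = Suc a" "d - (Suc i' + j) = a" using ij Suc by (metis Suc_diff_Suc add_Suc Suc_le_lessD)
      have "kapU d g (i, j) * cc (sigY g (i, j)) = of_nat (Suc a) * ccw i' j (Suc a)"
        using D1 Suc ij a by (simp add: kapU_def idx_def cc_ccw)
      also have "\<dots> = ccw i' j a" by (rule L1)
      also have "\<dots> = ccw (Suc i') j a * of_nat (Suc i')" using L2[of i' j a] by (simp add: mult.commute)
      also have "\<dots> = cc (i, j) * kapY d g (i, j)" using D1 Suc a by (simp add: cc_ccw)
      finally show ?thesis .
    qed
  next
    case D2 show ?thesis
    proof (cases j)
      case 0 then show ?thesis using D2 by (simp add: kapU_def)
    next
      case (Suc j')
      have a: "d - (Suc i + j') = d - (i + j)" using Suc by simp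
      have "kapU d g (i, j) * cc (sigY g (i, j)) = of_nat (Suc i) * ccw (Suc i) j' (d - (i + j))"
        using D2 Suc ij a by (simp add: kapU_def idx_def cc_ccw)
      also have "\<dots> = ccw i j' (d - (i + j))" by (rule L2)
      also have "\<dots> = ccw i (Suc j') (d - (i + j)) * of_nat (Suc j')" using L3[of j' i] by (simp add: mult.commute)
      also have "\<dots> = cc (i, j) * kapY d g (i, j)" using D2 Suc by (simp add: cc_ccw)
      finally show ?thesis .
    qed
  next
    case D3 show ?thesis
    proof (cases j)
      case 0 then show ?thesis using D3 by (simp add: kapU_def)
    next
      case (Suc j')
      obtain a where a: "d - (i + j') = Suc a" "d - (i + Suc j') = a" using ij Suc by (metis Suc_diff_Suc add_Suc_right Suc_le_lessD)
      have "kapU d g (i, j) * cc (sigY g (i, j)) = of_nat (Suc a) * ccw i j' (Suc a)"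
        using D3 Suc ij a by (simp add: kapU_def idx_def cc_ccw)
      also have "\<dots> = ccw i j' a" by (rule L1)
      also have "\<dots> = ccw i (Suc j') a * of_nat (Suc j')" using L3[of j' i a] by (simp add: mult.commute)
      also have "\<dots> = cc (i, j) * kapY d g (i, j)" using D3 Suc a by (simp add: cc_ccw)
      finally show ?thesis .
    qed
  next
    case hD1 show ?thesis
    proof (cases "d - (i + j)")
      case 0 then show ?thesis using hD1 by (simp add: kapU_def idx_def)
    next
      case (Suc a)
      have a: "d - (Suc i + j) = a" "Suc (i + j) \<le> d" using Suc by simp_all
      have "kapU d g (i, j) * cc (sigY g (i, j)) = of_nat (Suc i) * ccw (Suc i) j a"
        using hD1 Suc ij a by (simp add: kapU_def idx_def cc_ccw)
      also have "\<dots> = ccw i j a" by (rule L2)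
      also have "\<dots> = ccw i j (Suc a) * of_nat (Suc a)" using L1[of a i j] by (simp add: mult.commute)
      also have "\<dots> = cc (i, j) * kapY d g (i, j)" using hD1 Suc by (simp add: cc_ccw)
      finally show ?thesis .
    qed
  next
    case hD2 show ?thesis
    proof (cases i)
      case 0 then show ?thesis using hD2 by (simp add: kapU_def)
    next
      case (Suc i')
      have a: "d - (i' + Suc j) = d - (i + j)" using Suc by simp
      have "kapU d g (i, j) * cc (sigY g (i, j)) = of_nat (Suc j) * ccw i' (Suc j) (d - (i + j))"
        using hD2 Suc ij a by (simp add: kapU_def idx_def cc_ccw)
      also have "\<dots> = ccw i' j (d - (i + j))" by (rule L3)
      also have "\<dots> = ccw (Suc i') j (d - (i + j)) * of_nat (Suc i')" using L2[of i' j] by (simp add: mult.commute)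
      also have "\<dots> = cc (i, j) * kapY d g (i, j)" using hD2 Suc by (simp add: cc_ccw)
      finally show ?thesis .
    qed
  next
    case hD3 show ?thesis
    proof (cases "d - (i + j)")
      case 0 then show ?thesis using hD3 by (simp add: kapU_def idx_def)
    next
      case (Suc a)
      have a: "d - (i + Suc j) = a" "Suc (i + j) \<le> d" using Suc by simp_all
      have "kapU d g (i, j) * cc (sigY g (i, j)) = of_nat (Suc j) * ccw i (Suc j) a"
        using hD3 Suc ij a by (simp add: kapU_def idx_def cc_ccw)
      also have "\<dots> = ccw i j a" by (rule L3)
      also have "\<dots> = ccw i j (Suc a) * of_nat (Suc a)" using L1[of a i j] by (simp add: mult.commute)
      also have "\<dots> = cc (i, j) * kapY d g (i, j)" using hD3 Suc by (simp add: cc_ccw)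
      finally show ?thesis .
    qed
  next
    case H1 then show ?thesis using b by (simp add: kapU_def algebra_simps)
  next
    case H2 then show ?thesis using b by (simp add: kapU_def algebra_simps)
  qed
qed

end


context cov begin

definition coef :: "'k mpoly \<Rightarrow> nat \<times> nat \<Rightarrow> 'k" where
  "coef v = (SOME lam. v = (\<Sum>\<beta>\<in>idx d. smult (lam \<beta>) (u \<beta>)))"

lemma smult_diff_l: "smult (a - c) p = smult a p - smult c (p::'k mpoly)"
  by (simp add: smult_const const_diff algebra_simps)

lemma coef_eq:
  assumes v: "v = (\<Sum>\<beta>\<in>idx d. smult (lam \<beta>) (u \<beta>))" and b: "\<beta> \<in> idx d"
  shows "coef v \<beta> = lam \<beta>"
proof -
  have c: "v = (\<Sum>\<beta>\<in>idx d. smult (coef v \<beta>) (u \<beta>))"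
    unfolding coef_def by (rule someI[of _ lam]) (rule v)
  have "(\<Sum>\<beta>\<in>idx d. smult (coef v \<beta> - lam \<beta>) (u \<beta>)) = 0"
    using c v by (simp add: smult_diff_l sum_subtractf)
  then have "coef v \<beta> - lam \<beta> = 0" using u_indep[where lam="\<lambda>\<beta>. coef v \<beta> - lam \<beta>", OF _ b] by blast
  then show ?thesis by simp
qed

definition phi :: "'k mpoly \<Rightarrow> 'k mpoly" where
  "phi v = (\<Sum>\<beta>\<in>idx d. smult (coef v \<beta> * cc \<beta>) (ymd d \<beta>))"

lemma phi_span: "phi (\<Sum>\<beta>\<in>idx d. smult (lam \<beta>) (u \<beta>)) = (\<Sum>\<beta>\<in>idx d. smult (lam \<beta> * cc \<beta>) (ymd d \<beta>))"
  unfolding phi_def by (rule sum.cong[OF refl]) (simp add: coef_eq[OF refl])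

lemma u_as_sum: "\<beta>0 \<in> idx d \<Longrightarrow> u \<beta>0 = (\<Sum>\<beta>\<in>idx d. smult (if \<beta> = \<beta>0 then 1 else 0) (u \<beta>))"
  by (simp add: if_distrib[of "\<lambda>c. smult c _"] sum.delta cong: if_cong)

lemma phi_u: assumes b: "\<beta>0 \<in> idx d" shows "phi (u \<beta>0) = smult (cc \<beta>0) (ymd d \<beta>0)"
proof -
  have "phi (u \<beta>0) = (\<Sum>\<beta>\<in>idx d. smult ((if \<beta> = \<beta>0 then 1 else 0) * cc \<beta>) (ymd d \<beta>))"
    by (subst u_as_sum[OF b]) (rule phi_span)
  also have "\<dots> = (\<Sum>\<beta>\<in>idx d. if \<beta> = \<beta>0 then smult (cc \<beta>0) (ymd d \<beta>0) else 0)"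
    by (rule sum.cong) auto
  also have "\<dots> = smult (cc \<beta>0) (ymd d \<beta>0)" using b by simp
  finally show ?thesis .
qed

lemma phi_add: "v \<in> V \<Longrightarrow> w \<in> V \<Longrightarrow> phi (v + w) = phi v + phi w"
proof -
  assume "v \<in> V" "w \<in> V"
  then obtain l1 l2 where v: "v = (\<Sum>\<beta>\<in>idx d. smult (l1 \<beta>) (u \<beta>))" and w: "w = (\<Sum>\<beta>\<in>idx d. smult (l2 \<beta>) (u \<beta>))"
    using V_elem by blast
  have e: "v + w = (\<Sum>\<beta>\<in>idx d. smult (l1 \<beta> + l2 \<beta>) (u \<beta>))" by (simp add: v w smult_add_l sum.distrib)
  have "phi (v + w) = (\<Sum>\<beta>\<in>idx d. smult ((l1 \<beta> + l2 \<beta>) * cc \<beta>) (ymd d \<beta>))"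
    unfolding e by (rule phi_span)
  also have "\<dots> = phi v + phi w" unfolding v w phi_span by (simp add: smult_add_l sum.distrib distrib_right)
  finally show ?thesis .
qed

lemma phi_smult: "v \<in> V \<Longrightarrow> phi (smult c v) = smult c (phi v)"
proof -
  assume "v \<in> V"
  then obtain l1 where v: "v = (\<Sum>\<beta>\<in>idx d. smult (l1 \<beta>) (u \<beta>))" using V_elem by blast
  have "smult c v = (\<Sum>\<beta>\<in>idx d. smult (c * l1 \<beta>) (u \<beta>))" by (simp add: v smult_sum smult_smult)
  then show ?thesis by (simp add: v phi_span smult_sum smult_smult mult.assoc)
qed

lemma phi_zero: "phi 0 = 0"
  using phi_smult[OF V_zero, of 0] by simp

lemma phi_sum: "finite I \<Longrightarrow> (\<And>\<beta>. \<beta> \<in> I \<Longrightarrow> w \<beta> \<in> V) \<Longrightarrow>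
   phi (\<Sum>\<beta>\<in>I. smult (c \<beta>) (w \<beta>)) = (\<Sum>\<beta>\<in>I. smult (c \<beta>) (phi (w \<beta>)))"
proof (induction I rule: finite_induct)
  case empty then show ?case by (simp add: phi_zero)
next
  case (insert x F)
  have "(\<Sum>\<beta>\<in>F. smult (c \<beta>) (w \<beta>)) \<in> V"
    by (rule subspace_sum[OF V_sub]) (simp add: insert.prems V_smult)
  then show ?case using insert by (simp add: phi_add V_smult phi_smult)
qed

lemma phi_act_u: "\<beta> \<in> idx d \<Longrightarrow> phi (act n g (u \<beta>)) = act n g (phi (u \<beta>))"
proof -
  assume b: "\<beta> \<in> idx d"
  obtain i j where ij: "\<beta> = (i, j)" by (cases \<beta>)
  have r: "act n g (phi (u \<beta>)) = smult (cc \<beta> * kapY d g \<beta>) (ymd d (sigY g \<beta>))"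
    using b by (simp add: phi_u act_smult act_ymd' smult_smult)
  show ?thesis
  proof (cases "kapU d g \<beta> = (0::'k)")
    case True
    have k0: "kapU d g (i, j) = (0::'k)" using True ij by simp
    have "cc (i, j) * kapY d g (i, j) = 0" using compat_scalar[of i j g] b ij by (simp add: k0)
    then have "kapY d g \<beta> = (0::'k)" using cc_nz ij by simp
    then show ?thesis using True r b by (simp add: uact phi_zero)
  next
    case False
    then have s: "sigY g \<beta> \<in> idx d" by (rule kapU_idx)
    have "phi (act n g (u \<beta>)) = smult (kapU d g \<beta> * cc (sigY g \<beta>)) (ymd d (sigY g \<beta>))"
      using b s by (simp add: uact phi_smult u_in_V phi_u smult_smult)
    also have "\<dots> = act n g (phi (u \<beta>))" using r compat_scalar[of i j g] b ij by simp
    finally show ?thesis .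
  qed
qed

lemma Gamma_eq: "Gamma_d0 d = spanI (idx d) (ymd d)"
  unfolding Gamma_d0_def ymon_set by (rule span_eq[OF finite_idx])

lemma iso: "modules_iso n V (Gamma_d0 d)"
  unfolding modules_iso_def
proof (intro exI[of _ phi] conjI ballI allI)
  show "bij_betw phi V (Gamma_d0 d)"
    unfolding bij_betw_def
  proof
    show "inj_on phi V"
    proof (rule inj_onI)
      fix v w assume "v \<in> V" "w \<in> V" and e: "phi v = phi w"
      then obtain l1 l2 where v: "v = (\<Sum>\<beta>\<in>idx d. smult (l1 \<beta>) (u \<beta>))" and w: "w = (\<Sum>\<beta>\<in>idx d. smult (l2 \<beta>) (u \<beta>))"
        using V_elem by blast
      have "(\<Sum>\<beta>\<in>idx d. smult ((l1 \<beta> - l2 \<beta>) * cc \<beta>) (ymd d \<beta>)) = 0"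
        using e by (simp add: v w phi_span left_diff_distrib smult_diff_l sum_subtractf)
      then have "\<And>\<beta>. \<beta> \<in> idx d \<Longrightarrow> (l1 \<beta> - l2 \<beta>) * cc \<beta> = 0" using ymd_indep[where c="\<lambda>\<beta>. (l1 \<beta> - l2 \<beta>) * cc \<beta>"] by blast
      then have "\<And>\<beta>. \<beta> \<in> idx d \<Longrightarrow> l1 \<beta> = l2 \<beta>" using cc_nz by simp
      then show "v = w" unfolding v w by (intro sum.cong) auto
    qed
    show "phi ` V = Gamma_d0 d"
    proof
      show "phi ` V \<subseteq> Gamma_d0 d"
      proof
        fix p assume "p \<in> phi ` V"
        then obtain v where "v \<in> V" "p = phi v" by blast
        then obtain l1 where "p = phi (\<Sum>\<beta>\<in>idx d. smult (l1 \<beta>) (u \<beta>))" using V_elem by blast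
        then have "p = (\<Sum>\<beta>\<in>idx d. smult (l1 \<beta> * cc \<beta>) (ymd d \<beta>))" by (simp add: phi_span)
        then show "p \<in> Gamma_d0 d" unfolding Gamma_eq spanI_def
          by (intro CollectI exI[of _ "\<lambda>\<beta>. l1 \<beta> * cc \<beta>"])
      qed
      show "Gamma_d0 d \<subseteq> phi ` V"
      proof
        fix p :: "'k mpoly" assume "p \<in> Gamma_d0 d"
        then obtain mu where p: "p = (\<Sum>\<beta>\<in>idx d. smult (mu \<beta>) (ymd d \<beta>))" unfolding Gamma_eq spanI_def by blast
        let ?v = "\<Sum>\<beta>\<in>idx d. smult (mu \<beta> / cc \<beta>) (u \<beta>)"
        have "?v \<in> V" unfolding V_def spanI_def by (intro CollectI exI[of _ "\<lambda>\<beta>. mu \<beta> / cc \<beta>"]) (rule refl)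
        moreover have "phi ?v = p" by (simp add: phi_span p cc_nz)
        ultimately show "p \<in> phi ` V" by blast
      qed
    qed
  qed
next
  fix u' v' assume "u' \<in> V" "v' \<in> V" then show "phi (u' + v') = phi u' + phi v'" by (rule phi_add)
next
  fix c u' assume "u' \<in> V" then show "phi (smult c u') = smult c (phi u')" by (rule phi_smult)
next
  fix g v assume "v \<in> V"
  then obtain lam where v: "v = (\<Sum>\<beta>\<in>idx d. smult (lam \<beta>) (u \<beta>))" using V_elem by blast
  have "phi (act n g v) = phi (\<Sum>\<beta>\<in>idx d. smult (lam \<beta>) (act n g (u \<beta>)))"
    by (simp add: v act_sum act_smult)
  also have "\<dots> = (\<Sum>\<beta>\<in>idx d. smult (lam \<beta>) (phi (act n g (u \<beta>))))"
    by (rule phi_sum) (simp_all add: act_u_V)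
  also have "\<dots> = (\<Sum>\<beta>\<in>idx d. smult (lam \<beta>) (act n g (phi (u \<beta>))))"
    by (rule sum.cong[OF refl]) (simp add: phi_act_u)
  also have "\<dots> = act n g (\<Sum>\<beta>\<in>idx d. smult (lam \<beta>) (phi (u \<beta>)))"
    by (simp add: act_sum act_smult)
  also have "(\<Sum>\<beta>\<in>idx d. smult (lam \<beta>) (phi (u \<beta>))) = phi v"
    unfolding v by (rule phi_sum[symmetric]) (simp_all add: u_in_V)
  finally show "phi (act n g v) = act n g (phi v)" .
qed

end


context cov begin

lemma idx00: "(0, 0) \<in> idx d" by (simp add: idx_def)

lemma b00_u: "b 0 0 = u (0, 0)"
  by (simp add: u_def cc_def)

lemma highest: "highest_vector n V (b 0 0) d 0"
  unfolding highest_vector_def b00_u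
  using u_in_V[OF idx00] u00_nz
  by (simp add: uact[OF idx00] kapU_def idx_def)

lemma part5: "f = (\<Sum>(i, j)\<in>idx d.
          smult (1 / of_nat (fact i * fact j))
            (((act n hD1) ^^ i) (((act n hD3) ^^ j) (b 0 0)) * xmon (d - (i + j)) i j))"
  unfolding f_u
proof (rule sum.cong[OF refl])
  fix \<beta> assume b: "\<beta> \<in> idx d"
  obtain i j where ij: "\<beta> = (i, j)" by (cases \<beta>)
  have nz: "(of_nat (fact i * fact j) :: 'k) \<noteq> 0" by simp
  have "smult (1 / of_nat (fact i * fact j)) (((act n hD1) ^^ i) (((act n hD3) ^^ j) (b 0 0)) * xmon (d - (i + j)) i j)
     = smult (1 / of_nat (fact i * fact j) * of_nat (fact i * fact j)) (u (i, j) * xmd d (i, j))"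
    using b ij by (simp add: b00_u lower smult_mult_l smult_smult xmd_def)
  also have "\<dots> = u \<beta> * xmd d \<beta>" using nz ij by simp
  finally show "u \<beta> * xmd d \<beta> = (case \<beta> of (i, j) \<Rightarrow> smult (1 / of_nat (fact i * fact j))
            (((act n hD1) ^^ i) (((act n hD3) ^^ j) (b 0 0)) * xmon (d - (i + j)) i j))"
    using ij by simp
qed

lemma casimir: "is_Casimir n V (SdX d) f"
proof -
  define N where "N = card (idx d)"
  obtain e where e0: "bij_betw e {0..<N} (idx d)"
    using ex_bij_betw_nat_finite[OF finite_idx] unfolding N_def by blast
  have e: "bij_betw e {..<N} (idx d)" using e0 by (simp add: atLeast0LessThan)
  have img: "e ` {..<N} = idx d" using e by (simp add: bij_betw_def)
  have ein: "k < N \<Longrightarrow> e k \<in> idx d" for k using img by auto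
  have inv: "k < N \<Longrightarrow> inv_into {..<N} e (e k) = k" for k
    using e by (simp add: bij_betw_def inv_into_f_f)
  have reidx: "(\<Sum>k<N. G (e k)) = (\<Sum>\<beta>\<in>idx d. G \<beta>)" for G :: "nat \<times> nat \<Rightarrow> 'k mpoly"
    by (rule sum.reindex_bij_betw[OF e])
  define c where "c = (\<lambda>g l k. - kap d g (e l) * (if sig g (e l) = e k then 1 else (0::'k)))"
  have B1: "is_basis N V (\<lambda>k. u (e k))"
      unfolding is_basis_def
    proof (intro conjI allI impI)
      have "(\<lambda>k. u (e k)) ` {..<N} = u ` idx d" by (simp only: img[symmetric] image_image)
      then show "V = lin_span ((\<lambda>k. u (e k)) ` {..<N})" by (simp add: span_eq V_def)
    next
      fix a k assume z: "(\<Sum>k<N. smult (a k) (u (e k))) = 0" and k: "k < N"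
      let ?lam = "\<lambda>\<beta>. a (inv_into {..<N} e \<beta>)"
      have "(\<Sum>\<beta>\<in>idx d. smult (?lam \<beta>) (u \<beta>)) = (\<Sum>k<N. smult (?lam (e k)) (u (e k)))"
        by (rule reidx[symmetric])
      also have "\<dots> = (\<Sum>k<N. smult (a k) (u (e k)))" by (rule sum.cong) (auto simp: inv)
      finally have "(\<Sum>\<beta>\<in>idx d. smult (?lam \<beta>) (u \<beta>)) = 0" using z by simp
      then have "?lam (e k) = 0" using u_indep[where lam = ?lam] ein[OF k] by blast
      then show "a k = 0" using inv[OF k] by simp
    qed
  have B2: "is_basis N (SdX d) (\<lambda>k. xmd d (e k) :: 'k mpoly)"
      unfolding is_basis_def
    proof (intro conjI allI impI)
      show "SdX d = lin_span ((\<lambda>k. xmd d (e k) :: 'k mpoly) ` {..<N})" by (simp only: SdX_def xmon_set img[symmetric] image_image)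
    next
      fix a k assume z: "(\<Sum>k<N. smult (a k) (xmd d (e k))) = (0::'k mpoly)" and k: "k < N"
      let ?lam = "\<lambda>\<beta>. a (inv_into {..<N} e \<beta>)"
      have "(\<Sum>\<beta>\<in>idx d. smult (?lam \<beta>) (xmd d \<beta>)) = (\<Sum>k<N. smult (?lam (e k)) (xmd d (e k) :: 'k mpoly))"
        by (rule reidx[symmetric])
      also have "\<dots> = (\<Sum>k<N. smult (a k) (xmd d (e k)))" by (rule sum.cong) (auto simp: inv)
      finally have "(\<Sum>\<beta>\<in>idx d. smult (?lam \<beta>) (xmd d \<beta> :: 'k mpoly)) = 0" using z by simp
      then have "?lam (e k) = 0" using xmd_indep[where c = ?lam] ein[OF k] by blast
      then show "a k = 0" using inv[OF k] by simp
    qed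
  have R: "\<forall>g. \<forall>k<N. act n g (u (e k)) = (\<Sum>l<N. smult (c g l k) (u (e l))) \<and>
                act n g (xmd d (e k) :: 'k mpoly) = (\<Sum>l<N. smult (- c g k l) (xmd d (e l)))"
  proof (intro allI impI conjI)
    fix g k assume k: "k < N"
    have "act n g (u (e k)) = (\<Sum>\<beta>\<in>idx d. smult (- kap d g \<beta> * (if sig g \<beta> = e k then 1 else 0)) (u \<beta>))"
      by (rule urel[OF ein[OF k]])
    also have "\<dots> = (\<Sum>l<N. smult (- kap d g (e l) * (if sig g (e l) = e k then 1 else 0)) (u (e l)))"
      by (rule reidx[symmetric])
    finally show "act n g (u (e k)) = (\<Sum>l<N. smult (c g l k) (u (e l)))"
      unfolding c_def .
    have "(\<Sum>l<N. smult (- c g k l) (xmd d (e l))) = (\<Sum>l<N. smult (kap d g (e k) * (if sig g (e k) = e l then 1 else 0)) (xmd d (e l) :: 'k mpoly))"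
      unfolding c_def by simp
    also have "\<dots> = (\<Sum>\<beta>\<in>idx d. smult (kap d g (e k) * (if sig g (e k) = \<beta> then 1 else 0)) (xmd d \<beta> :: 'k mpoly))"
      by (rule reidx)
    also have "\<dots> = (\<Sum>\<beta>\<in>idx d. if sig g (e k) = \<beta> then smult (kap d g (e k)) (xmd d (sig g (e k))) else 0)"
      by (rule sum.cong) auto
    also have "\<dots> = (if sig g (e k) \<in> idx d then smult (kap d g (e k)) (xmd d (sig g (e k))) else 0)"
      by (rule sum.delta'[OF finite_idx])
    also have "\<dots> = act n g (xmd d (e k))"
    proof (cases "sig g (e k) \<in> idx d")
      case False
      then have "kap d g (e k) = (0::'k)" using sig_idx[OF ein[OF k]] by blast
      then show ?thesis using False by (simp add: act_xmd'[OF ein[OF k]])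
    qed (simp add: act_xmd'[OF ein[OF k]])
    finally show "act n g (xmd d (e k) :: 'k mpoly) = (\<Sum>l<N. smult (- c g k l) (xmd d (e l)))" by simp
  qed
  have F: "f = (\<Sum>k<N. u (e k) * xmd d (e k))" unfolding f_u by (rule reidx[symmetric])
  show ?thesis
    unfolding is_Casimir_def
    by (rule exI[of _ N], rule exI[of _ "\<lambda>k. u (e k)"], rule exI[of _ "\<lambda>k. xmd d (e k) :: 'k mpoly"],
        rule exI[of _ c]) (intro conjI B1 B2 R F)
qed

end

theorem mainTheorem4:
  fixes n d :: nat
    and f :: "'k::field_char_0 mpoly"
    and b :: "nat \<Rightarrow> nat \<Rightarrow> 'k mpoly"
  assumes b_in_KA: "\<And>i j. i + j \<le> d \<Longrightarrow> in_KA n (b i j)"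
    and f_eq: "f = (\<Sum>(i, j)\<in>idx d.
          smult (of_nat (fact d) / of_nat (fact i * fact j * fact (d - (i + j))))
            (b i j * xmon (d - (i + j)) i j))"
    and irr: "irreducible_covariant n f"
  shows "irreducible_module n (lin_span {b i j | i j. i + j \<le> d})
       \<and> modules_iso n (lin_span {b i j | i j. i + j \<le> d}) (Gamma_d0 d)
       \<and> highest_vector n (lin_span {b i j | i j. i + j \<le> d}) (b 0 0) d 0
       \<and> is_Casimir n (lin_span {b i j | i j. i + j \<le> d}) (SdX d) f
       \<and> f = (\<Sum>(i, j)\<in>idx d.
          smult (1 / of_nat (fact i * fact j))
            (((act n hD1) ^^ i) (((act n hD3) ^^ j) (b 0 0)) * xmon (d - (i + j)) i j))"
proof -
  interpret C: cov n d f b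
    using b_in_KA f_eq irr by (simp add: cov_def)
  show ?thesis
    unfolding C.V_eq using C.irreducible_V C.iso C.highest C.casimir C.part5 by blast
qed


end
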